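(* There are finite languages $L_1, L_2$ with regular expressions of length $O(n)$ such that (a) $\mathrm{rpn}(L_1 \cap L_2) \geq n^{\Omega(\log n)}$, (b) $\mathrm{rpn}(\operatorname{shuffle}(L_1, L_2)) \geq n^{\Omega(\log n)}$. There is a regular language $L \subseteq \Sigma^*$ with regular expressions of length $O(n)$, such that (c) $\mathrm{rpn}(L \cap \Sigma^n) \geq n^{\Omega(\log n)}$.
   Context: Regular expressions are built from $\emptyset$, $\epsilon$, letters of an alphabet $\Sigma$, union $(+)$, concatenation $(\cdot)$ and star $(^* )$. The length $\mathrm{rpn}(R)$ of an expression $R$ is its reverse polish length, i.e., the number of nodes in its syntax tree; for a regular language $L$, $\mathrm{rpn}(L)$ is the length of a shortest expression describing $L$. The shuffle (interleaving) of two words $v,w$ is the set of all words of the form $v_1 w_1 v_2 w_2 \cdots v_k w_k$ with $k\in\mathbb{N}$, $v_i,w_i\in\Sigma^*$, $v_1\cdots v_k = v$ and $w_1\cdots w_k = w$; the shuffle of two languages is $\operatorname{shuffle}(L_1,L_2)=\bigcup_{v\in L_1, w\in L_2}\operatorname{shuffle}(v,w)$. *)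

theory Defs
  imports Complex_Main
begin

datatype 'a rexp = Zero | One | Atom 'a | Plus "'a rexp" "'a rexp"
  | Times "'a rexp" "'a rexp" | Star "'a rexp"

definition conc :: "'a list set \<Rightarrow> 'a list set \<Rightarrow> 'a list set" where
  "conc A B = {u @ v | u v. u \<in> A \<and> v \<in> B}"

inductive_set star :: "'a list set \<Rightarrow> 'a list set" for A where
  star_Nil: "[] \<in> star A"
| star_app: "u \<in> A \<Longrightarrow> v \<in> star A \<Longrightarrow> u @ v \<in> star A"

fun lang :: "'a rexp \<Rightarrow> 'a list set" where
  "lang Zero = {}"
| "lang One = {[]}"
| "lang (Atom a) = {[a]}"
| "lang (Plus r s) = lang r \<union> lang s"
| "lang (Times r s) = conc (lang r) (lang s)"
| "lang (Star r) = star (lang r)"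

text \<open>Reverse polish length = number of nodes of the syntax tree.\<close>
fun rpn_len :: "'a rexp \<Rightarrow> nat" where
  "rpn_len Zero = 1"
| "rpn_len One = 1"
| "rpn_len (Atom a) = 1"
| "rpn_len (Plus r s) = rpn_len r + rpn_len s + 1"
| "rpn_len (Times r s) = rpn_len r + rpn_len s + 1"
| "rpn_len (Star r) = rpn_len r + 1"

text \<open>Length of a shortest expression describing L (meaningful for regular L).\<close>
definition rpn :: "'a list set \<Rightarrow> nat" where
  "rpn L = (LEAST k. \<exists>r. lang r = L \<and> rpn_len r = k)"

definition shuffle_lang :: "'a list set \<Rightarrow> 'a list set \<Rightarrow> 'a list set" where
  "shuffle_lang L1 L2 = (\<Union>v\<in>L1. \<Union>w\<in>L2. shuffles v w)"

end

theory Submission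
  imports Defs "HOL-Library.Multiset"
begin

lemma conc_empty1[simp]: "conc {} B = {}" and conc_empty2[simp]: "conc A {} = {}"
  by (auto simp: conc_def)

lemma star_mono_set: "x \<in> star A \<Longrightarrow> A \<subseteq> B \<Longrightarrow> x \<in> star B"
  by (induction rule: star.induct) (auto intro: star.intros)

fun hom :: "('a \<Rightarrow> 'b option option) \<Rightarrow> 'a rexp \<Rightarrow> 'b rexp" where
  "hom f Zero = Zero"
| "hom f One = One"
| "hom f (Atom a) = (case f a of None \<Rightarrow> Zero | Some None \<Rightarrow> One | Some (Some b) \<Rightarrow> Atom b)"
| "hom f (Plus r s) = Plus (hom f r) (hom f s)"
| "hom f (Times r s) = Times (hom f r) (hom f s)"
| "hom f (Star r) = Star (hom f r)"

definition hl :: "('a \<Rightarrow> 'b option option) \<Rightarrow> 'a \<Rightarrow> 'b list" where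
  "hl f a = (case f a of Some (Some b) \<Rightarrow> [b] | _ \<Rightarrow> [])"

definition hw :: "('a \<Rightarrow> 'b option option) \<Rightarrow> 'a list \<Rightarrow> 'b list" where
  "hw f w = concat (map (hl f) w)"

definition okw :: "('a \<Rightarrow> 'b option option) \<Rightarrow> 'a list \<Rightarrow> bool" where
  "okw f w = (\<forall>a\<in>set w. f a \<noteq> None)"

lemma hw_simps[simp]: "hw f [] = []" "hw f (u @ v) = hw f u @ hw f v" "hw f (a # v) = hl f a @ hw f v"
  by (auto simp: hw_def)

lemma okw_simps[simp]: "okw f []" "okw f (u @ v) = (okw f u \<and> okw f v)" "okw f (a # v) = (f a \<noteq> None \<and> okw f v)"
  by (auto simp: okw_def)

lemma rpn_len_hom[simp]: "rpn_len (hom f r) = rpn_len r"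
  by (induction r) (auto split: option.splits)

lemma star_hom1: "x \<in> star A \<Longrightarrow> okw f x \<Longrightarrow> hw f x \<in> star (hw f ` {w \<in> A. okw f w})"
  by (induction rule: star.induct) (auto intro: star.intros)

lemma star_hom2: "y \<in> star (hw f ` {w \<in> A. okw f w}) \<Longrightarrow> y \<in> hw f ` {w \<in> star A. okw f w}"
proof (induction rule: star.induct)
  case star_Nil
  then show ?case by (auto intro!: image_eqI[of _ _ "[]"] star.intros)
next
  case (star_app u v)
  then obtain u' v' where "u = hw f u'" "u' \<in> A" "okw f u'" "v = hw f v'" "v' \<in> star A" "okw f v'" by blast
  then show ?case by (auto intro!: image_eqI[of _ _ "u' @ v'"] star.intros)
qed

lemma lang_hom: "lang (hom f r) = hw f ` {w \<in> lang r. okw f w}"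
proof (induction r)
  case (Atom a)
  then show ?case by (auto split: option.splits simp: hl_def)
next
  case (Times r s)
  show ?case
  proof
    show "lang (hom f (Times r s)) \<subseteq> hw f ` {w \<in> lang (Times r s). okw f w}"
    proof
      fix x assume "x \<in> lang (hom f (Times r s))"
      then obtain u v where "x = u @ v" "u \<in> lang (hom f r)" "v \<in> lang (hom f s)" by (auto simp: conc_def)
      then obtain u' v' where "u = hw f u'" "u' \<in> lang r" "okw f u'" "v = hw f v'" "v' \<in> lang s" "okw f v'"
        using Times by auto
      then show "x \<in> hw f ` {w \<in> lang (Times r s). okw f w}"
        using \<open>x = u @ v\<close> by (intro image_eqI[of _ _ "u' @ v'"]) (auto simp: conc_def)
    qed
    show "hw f ` {w \<in> lang (Times r s). okw f w} \<subseteq> lang (hom f (Times r s))"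
      using Times by (fastforce simp: conc_def)
  qed
next
  case (Star r)
  show ?case
  proof
    show "lang (hom f (Star r)) \<subseteq> hw f ` {w \<in> lang (Star r). okw f w}"
      using Star star_hom2 by fastforce
    show "hw f ` {w \<in> lang (Star r). okw f w} \<subseteq> lang (hom f (Star r))"
      using Star star_hom1 by fastforce
  qed
qed auto

section \<open>Positional restriction\<close>

definition decl :: "('a \<Rightarrow> nat) \<Rightarrow> nat \<Rightarrow> 'a list \<Rightarrow> bool" where
  "decl pos p v = (\<forall>i<length v. pos (v ! i) = p + i)"

lemma decl_Nil[simp]: "decl pos p []" by (simp add: decl_def)

lemma decl_append: "decl pos p (u @ v) = (decl pos p u \<and> decl pos (p + length u) v)"
proof
  assume a: "decl pos p (u @ v)"
  show "decl pos p u \<and> decl pos (p + length u) v"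
    unfolding decl_def
  proof (intro conjI allI impI)
    fix i assume "i < length u"
    then show "pos (u ! i) = p + i" using a unfolding decl_def
      by (metis length_append nth_append trans_less_add1)
  next
    fix i assume "i < length v"
    then show "pos (v ! i) = p + length u + i" using a unfolding decl_def
      by (metis add.assoc length_append nat_add_left_cancel_less nth_append_length_plus)
  qed
next
  assume a: "decl pos p u \<and> decl pos (p + length u) v"
  show "decl pos p (u @ v)" unfolding decl_def
  proof (intro allI impI)
    fix i assume i: "i < length (u @ v)"
    show "pos ((u @ v) ! i) = p + i"
    proof (cases "i < length u")
      case True then show ?thesis using a by (simp add: decl_def nth_append)
    next
      case False
      then have "i - length u < length v" using i by simp
      then show ?thesis using a False by (simp add: decl_def nth_append)
    qed
  qed
qed

lemma decl_single: "decl pos p [a] = (pos a = p)" by (simp add: decl_def)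

fun T :: "('a \<Rightarrow> nat) \<Rightarrow> nat \<Rightarrow> nat \<Rightarrow> 'a rexp \<Rightarrow> 'a rexp" where
  "T pos p q Zero = Zero"
| "T pos p q One = (if p = q then One else Zero)"
| "T pos p q (Atom a) = (if pos a = p \<and> q = Suc p then Atom a else Zero)"
| "T pos p q (Plus r s) = Plus (T pos p q r) (T pos p q s)"
| "T pos p q (Times r s) = (let m = p + length (SOME x. x \<in> lang r) in Times (T pos p m r) (T pos m q s))"
| "T pos p q (Star r) = (if p = q then One else Zero)"

lemma rpn_len_T: "rpn_len (T pos p q r) \<le> rpn_len r"
  by (induction r arbitrary: p q) (auto simp: Let_def intro: add_mono)

lemma T_sound: "v \<in> lang (T pos p q r) \<Longrightarrow> v \<in> lang r \<and> decl pos p v \<and> q = p + length v"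
proof (induction r arbitrary: p q v)
  case (Times r s)
  then show ?case by (fastforce simp: Let_def conc_def decl_append)
next
  case (Star r)
  then show ?case by (auto split: if_splits intro: star.intros)
qed (auto split: if_splits simp: decl_single)

lemma T_complete: "(\<forall>x\<in>lang r. length x = length v) \<Longrightarrow> v \<in> lang r \<Longrightarrow> decl pos p v
  \<Longrightarrow> v \<in> lang (T pos p (p + length v) r)"
proof (induction r arbitrary: p v)
  case (Times r s)
  from Times.prems obtain v1 v2 where v: "v = v1 @ v2" "v1 \<in> lang r" "v2 \<in> lang s" by (auto simp: conc_def)
  have l1: "\<forall>x\<in>lang r. length x = length v1"
  proof
    fix x assume "x \<in> lang r"
    then have "x @ v2 \<in> lang (Times r s)" using v by (auto simp: conc_def)
    then show "length x = length v1" using Times.prems(1) v by fastforce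
  qed
  have l2: "\<forall>x\<in>lang s. length x = length v2"
  proof
    fix x assume "x \<in> lang s"
    then have "v1 @ x \<in> lang (Times r s)" using v by (auto simp: conc_def)
    then show "length x = length v2" using Times.prems(1) v by fastforce
  qed
  have sm: "length (SOME x. x \<in> lang r) = length v1" using l1 v(2) by (metis someI)
  have d1: "decl pos p v1" and d2: "decl pos (p + length v1) v2" using Times.prems(3) v by (auto simp: decl_append)
  have "v1 \<in> lang (T pos p (p + length v1) r)" using Times.IH(1)[OF l1 v(2) d1] .
  moreover have "v2 \<in> lang (T pos (p + length v1) (p + length v1 + length v2) s)" using Times.IH(2)[OF l2 v(3) d2] .
  ultimately show ?case using sm v by (auto simp: Let_def conc_def add.assoc)
next
  case (Star r)
  have "[] \<in> lang (Star r)" by (auto intro: star.intros)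
  then have "v = []" using bspec[OF Star.prems(1)] by fastforce
  then show ?case by simp
next
  case (Plus r s)
  show ?case
  proof (cases "v \<in> lang r")
    case True
    have "\<forall>x\<in>lang r. length x = length v" using Plus.prems(1) by auto
    then show ?thesis using Plus.IH(1)[OF _ True Plus.prems(3)] by simp
  next
    case False
    then have vs: "v \<in> lang s" using Plus.prems(2) by simp
    have "\<forall>x\<in>lang s. length x = length v" using Plus.prems(1) by auto
    then show ?thesis using Plus.IH(2)[OF _ vs Plus.prems(3)] by simp
  qed
next
  case (Atom a)
  have va: "v = [a]" using Atom.prems(2) by simp
  then have "pos a = p" using Atom.prems(3) by (simp add: decl_single)
  then show ?case using va by simp
qed auto

fun wre :: "'a list \<Rightarrow> 'a rexp" where
  "wre [] = One" | "wre (a # as) = Times (Atom a) (wre as)"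

lemma lang_wre[simp]: "lang (wre xs) = {xs}"
  by (induction xs) (auto simp: conc_def)

lemma rpn_len_wre[simp]: "rpn_len (wre xs) = 2 * length xs + 1"
  by (induction xs) auto

definition sumre :: "'a rexp list \<Rightarrow> 'a rexp" where "sumre rs = foldr Plus rs Zero"

lemma lang_sumre[simp]: "lang (sumre rs) = (\<Union>r\<in>set rs. lang r)"
  by (induction rs) (auto simp: sumre_def)

lemma rpn_len_sumre: "rpn_len (sumre rs) = sum_list (map (\<lambda>r. rpn_len r + 1) rs) + 1"
  by (induction rs) (auto simp: sumre_def)

lemma finite_reg: "finite L \<Longrightarrow> \<exists>r. lang r = L"
proof -
  assume "finite L"
  then obtain xs where "set xs = L" using finite_list by blast
  then show ?thesis by (intro exI[of _ "sumre (map wre xs)"]) auto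
qed

lemma rpn_ge:
  assumes "finite L" "\<And>r. lang r = L \<Longrightarrow> x \<le> rpn_len r"
  shows "x \<le> rpn L"
proof -
  obtain r0 where "lang r0 = L" using finite_reg[OF assms(1)] by blast
  then have ex: "\<exists>k r. lang r = L \<and> rpn_len r = k" by blast
  then obtain r where "lang r = L" "rpn_len r = rpn L"
    unfolding rpn_def using LeastI_ex[OF ex] by blast
  then show ?thesis using assms(2) by metis
qed

fun starfree :: "'a rexp \<Rightarrow> bool" where
  "starfree (Star r) = False"
| "starfree (Plus r s) = (starfree r \<and> starfree s)"
| "starfree (Times r s) = (starfree r \<and> starfree s)"
| "starfree _ = True"

lemma finite_conc: "finite A \<Longrightarrow> finite B \<Longrightarrow> finite (conc A B)"
proof -
  assume "finite A" "finite B"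
  have "conc A B = (\<lambda>(u,v). u @ v) ` (A \<times> B)" by (auto simp: conc_def)
  then show ?thesis using \<open>finite A\<close> \<open>finite B\<close> by simp
qed

lemma finite_starfree: "starfree r \<Longrightarrow> finite (lang r)"
  by (induction r) (auto intro: finite_conc)

lemma card_conc_le: "finite A \<Longrightarrow> finite B \<Longrightarrow> card (conc A B) \<le> card A * card B"
proof -
  assume "finite A" "finite B"
  have "conc A B = (\<lambda>(u,v). u @ v) ` (A \<times> B)" by (auto simp: conc_def)
  moreover have "card ((\<lambda>(u,v). u @ v) ` (A \<times> B)) \<le> card (A \<times> B)"
    by (rule card_image_le) (simp add: \<open>finite A\<close> \<open>finite B\<close>)
  ultimately have "card (conc A B) \<le> card (A \<times> B)" by simp
  then show ?thesis by (simp add: card_cartesian_product)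
qed

section \<open>The lower bound family\<close>

fun lg :: "nat \<Rightarrow> nat" where
  "lg n = (if n \<le> 1 then 0 else Suc (lg (n div 2)))"

declare lg.simps[simp del]

lemma lg_mono: "m \<le> n \<Longrightarrow> lg m \<le> lg n"
proof (induction n arbitrary: m rule: less_induct)
  case (less n)
  show ?case
  proof (cases "m \<le> 1")
    case True then show ?thesis by (simp add: lg.simps)
  next
    case False
    then have "lg (m div 2) \<le> lg (n div 2)" using less by (intro less.IH) auto
    then show ?thesis using False less.prems by (subst (1 2) lg.simps) auto
  qed
qed

lemma lg_add: "lg (a + b) \<le> Suc (lg (max a b))"
proof (cases "a + b \<le> 1")
  case True then show ?thesis by (simp add: lg.simps)
next
  case False
  then have "lg (a + b) = Suc (lg ((a + b) div 2))" by (simp add: lg.simps)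
  also have "\<dots> \<le> Suc (lg (max a b))" by (intro Suc_le_mono[THEN iffD2] lg_mono) auto
  finally show ?thesis .
qed

lemma lg_pow2[simp]: "lg (2 ^ k) = k"
proof (induction k)
  case 0 then show ?case by (simp add: lg.simps)
next
  case (Suc k)
  have "(1::nat) < 2 ^ Suc k" by (rule one_less_power) auto
  then show ?case using Suc by (simp add: lg.simps)
qed

lemma lg_bounds: "n \<ge> 1 \<Longrightarrow> 2 ^ lg n \<le> n \<and> n < 2 ^ Suc (lg n)"
proof (induction n rule: less_induct)
  case (less n)
  show ?case
  proof (cases "n \<le> 1")
    case True then show ?thesis using less.prems by (simp add: lg.simps)
  next
    case False
    then have "2 ^ lg (n div 2) \<le> n div 2 \<and> n div 2 < 2 ^ Suc (lg (n div 2))"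
      by (intro less.IH) auto
    then show ?thesis using False by (subst (1 2) lg.simps) auto
  qed
qed

lemma mod_cancel: "(x + z) mod (W::nat) = (y + z) mod W \<Longrightarrow> x mod W = y mod W"
  by (auto simp: nat_mod_eq_iff)

lemma mod_fix: "s < (W::nat) \<Longrightarrow> (a + (s + W - a mod W) mod W) mod W = s"
proof -
  assume s: "s < W"
  have b: "a mod W < W" using s by simp
  have "(a + (s + W - a mod W) mod W) mod W = (a + (s + W - a mod W)) mod W" by (simp add: mod_add_right_eq)
  also have "\<dots> = (a mod W + (s + W - a mod W)) mod W" by (simp add: mod_add_left_eq)
  also have "a mod W + (s + W - a mod W) = s + W" using b by simp
  also have "(s + W) mod W = s" using s by simp
  finally show ?thesis .
qed

definition Mset :: "nat \<Rightarrow> nat \<Rightarrow> nat \<Rightarrow> nat list set" where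
  "Mset W l s = {xs. length xs = l \<and> (\<forall>x\<in>set xs. x < W) \<and> sum_list xs mod W = s}"

lemma Mset_finite: "finite (Mset W l s)"
proof -
  have "Mset W l s \<subseteq> {xs. set xs \<subseteq> {..<W} \<and> length xs = l}" by (auto simp: Mset_def)
  then show ?thesis using finite_lists_length_eq[of "{..<W}" l] finite_subset by blast
qed

lemma card_Mset:
  assumes "W \<ge> 1" "s < W"
  shows "card (Mset W (Suc m) s) = W ^ m"
proof -
  define g where "g ys = ys @ [(s + W - sum_list ys mod W) mod W]" for ys :: "nat list"
  define A where "A = {ys. set ys \<subseteq> {..<W} \<and> length ys = m}"
  have "Mset W (Suc m) s = g ` A"
  proof
    show "g ` A \<subseteq> Mset W (Suc m) s"
    proof
      fix x assume "x \<in> g ` A"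
      then obtain ys where ys: "ys \<in> A" "x = g ys" by blast
      have "(sum_list ys + (s + W - sum_list ys mod W) mod W) mod W = s"
        using mod_fix assms by blast
      then show "x \<in> Mset W (Suc m) s" using ys assms by (auto simp: g_def A_def Mset_def)
    qed
    show "Mset W (Suc m) s \<subseteq> g ` A"
    proof
      fix x assume x: "x \<in> Mset W (Suc m) s"
      have "length x = Suc m" using x by (simp add: Mset_def)
      then obtain ys y where xy: "x = ys @ [y]" by (auto simp: length_Suc_conv_rev)
      have yW: "y < W" and ysA: "ys \<in> A" using x xy by (auto simp: Mset_def A_def)
      have sm: "(sum_list ys + y) mod W = s" using x xy by (simp add: Mset_def)
      have "y = (s + W - sum_list ys mod W) mod W"
      proof -
        define y' where "y' = (s + W - sum_list ys mod W) mod W"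
        have "(sum_list ys + y') mod W = s" unfolding y'_def using mod_fix assms by blast
        then have "(y + sum_list ys) mod W = (y' + sum_list ys) mod W" using sm by (simp add: add.commute)
        then have "y mod W = y' mod W" by (rule mod_cancel)
        moreover have "y' < W" using assms by (simp add: y'_def)
        ultimately show ?thesis using yW by (simp add: y'_def)
      qed
      then show "x \<in> g ` A" using xy ysA by (auto simp: g_def)
    qed
  qed
  moreover have "inj_on g A" by (auto simp: inj_on_def g_def)
  ultimately have "card (Mset W (Suc m) s) = card A" by (simp add: card_image)
  also have "card A = W ^ m" unfolding A_def using card_lists_length_eq[of "{..<W}" m] by simp
  finally show ?thesis .
qed

lemma pow_split: "l1 \<ge> 1 \<Longrightarrow> l2 \<ge> 1 \<Longrightarrow> (W::nat) ^ (l1 - 1) * W ^ (l2 - 1) * W = W ^ (l1 + l2 - 1)"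
  by (cases l1; cases l2) (auto simp: power_add)

lemma LB:
  assumes "W \<ge> 1"
  shows "l \<ge> 1 \<Longrightarrow> lang r \<subseteq> Mset W l s \<Longrightarrow> card (lang r) * W ^ lg l \<le> rpn_len r * W ^ (l - 1)"
proof (induction r arbitrary: l s)
  case Zero then show ?case by simp
next
  case One then show ?case by (auto simp: Mset_def)
next
  case (Atom a)
  then have "l = 1" by (auto simp: Mset_def)
  then show ?case by (simp add: lg.simps)
next
  case (Star r)
  have "[] \<in> lang (Star r)" by (auto intro: star.intros)
  then show ?case using Star.prems by (auto simp: Mset_def)
next
  case (Plus r1 r2)
  have "card (lang (Plus r1 r2)) \<le> card (lang r1) + card (lang r2)" by (simp add: card_Un_le)
  then have "card (lang (Plus r1 r2)) * W ^ lg l \<le> (card (lang r1) + card (lang r2)) * W ^ lg l"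
    by simp
  also have "\<dots> \<le> rpn_len r1 * W ^ (l - 1) + rpn_len r2 * W ^ (l - 1)"
    using Plus.IH[of l s] Plus.prems by (simp add: add_mult_distrib add_mono)
  also have "\<dots> \<le> rpn_len (Plus r1 r2) * W ^ (l - 1)" by (simp add: add_mult_distrib)
  finally show ?case .
next
  case (Times r1 r2)
  let ?R1 = "lang r1" and ?R2 = "lang r2"
  show ?case
  proof (cases "?R1 = {} \<or> ?R2 = {}")
    case True then show ?thesis by auto
  next
    case False
    then obtain v1 v2 where v: "v1 \<in> ?R1" "v2 \<in> ?R2" by blast
    have sub: "x @ y \<in> Mset W l s" if "x \<in> ?R1" "y \<in> ?R2" for x y
      using Times.prems that by (auto simp: conc_def)
    define l1 where "l1 = length v1"
    define l2 where "l2 = length v2"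
    have ll: "l1 + l2 = l" using sub[OF v] by (simp add: Mset_def l1_def l2_def)
    have len1: "length x = l1" if "x \<in> ?R1" for x using sub[OF that v(2)] sub[OF v] by (simp add: Mset_def l1_def)
    have len2: "length y = l2" if "y \<in> ?R2" for y using sub[OF v(1) that] sub[OF v] by (simp add: Mset_def l2_def)
    define s1 where "s1 = sum_list v1 mod W"
    define s2 where "s2 = sum_list v2 mod W"
    have M1: "?R1 \<subseteq> Mset W l1 s1"
    proof
      fix x assume x: "x \<in> ?R1"
      have a: "(sum_list x + sum_list v2) mod W = s" "(sum_list v1 + sum_list v2) mod W = s"
        using sub[OF x v(2)] sub[OF v] by (auto simp: Mset_def)
      then have "sum_list x mod W = sum_list v1 mod W"
        using mod_cancel[of "sum_list x" "sum_list v2" W "sum_list v1"] by simp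
      then show "x \<in> Mset W l1 s1" using sub[OF x v(2)] len1[OF x] by (auto simp: Mset_def s1_def)
    qed
    have M2: "?R2 \<subseteq> Mset W l2 s2"
    proof
      fix y assume y: "y \<in> ?R2"
      have a: "(sum_list v1 + sum_list y) mod W = s" "(sum_list v1 + sum_list v2) mod W = s"
        using sub[OF v(1) y] sub[OF v] by (auto simp: Mset_def)
      then have "sum_list y mod W = sum_list v2 mod W"
        using mod_cancel[of "sum_list y" "sum_list v1" W "sum_list v2"] by (simp add: add.commute)
      then show "y \<in> Mset W l2 s2" using sub[OF v(1) y] len2[OF y] by (auto simp: Mset_def s2_def)
    qed
    have f1: "finite ?R1" and f2: "finite ?R2" using M1 M2 Mset_finite finite_subset by blast+
    have cc: "card (lang (Times r1 r2)) \<le> card ?R1 * card ?R2" using card_conc_le[OF f1 f2] by simp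
    show ?thesis
    proof (cases "l1 = 0 \<or> l2 = 0")
      case True
      show ?thesis
      proof (cases "l1 = 0")
        case True
        then have "?R1 = {[]}" using len1 v(1) by auto
        then have "lang (Times r1 r2) = ?R2" by (auto simp: conc_def)
        then have "card (lang (Times r1 r2)) * W ^ lg l \<le> rpn_len r2 * W ^ (l - 1)"
          using Times.IH(2)[of l s] Times.prems by simp
        also have "\<dots> \<le> rpn_len (Times r1 r2) * W ^ (l - 1)" by (intro mult_le_mono1) simp
        finally show ?thesis .
      next
        case False
        then have "l2 = 0" using True by simp
        then have "?R2 = {[]}" using len2 v(2) by auto
        then have "lang (Times r1 r2) = ?R1" by (auto simp: conc_def)
        then have "card (lang (Times r1 r2)) * W ^ lg l \<le> rpn_len r1 * W ^ (l - 1)"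
          using Times.IH(1)[of l s] Times.prems by simp
        also have "\<dots> \<le> rpn_len (Times r1 r2) * W ^ (l - 1)" by (intro mult_le_mono1) simp
        finally show ?thesis .
      qed
    next
      case False
      have s1W: "s1 < W" "s2 < W" using assms by (auto simp: s1_def s2_def)
      have c1: "card ?R1 \<le> W ^ (l1 - 1)" and c2: "card ?R2 \<le> W ^ (l2 - 1)"
        using card_mono[OF Mset_finite M1] card_mono[OF Mset_finite M2] card_Mset[OF assms s1W(1), of "l1 - 1"]
          card_Mset[OF assms s1W(2), of "l2 - 1"] False by auto
      have IH1: "card ?R1 * W ^ lg l1 \<le> rpn_len r1 * W ^ (l1 - 1)" using Times.IH(1)[OF _ M1] False by simp
      have IH2: "card ?R2 * W ^ lg l2 \<le> rpn_len r2 * W ^ (l2 - 1)" using Times.IH(2)[OF _ M2] False by simp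
      have lgl: "lg l \<le> Suc (lg (max l1 l2))" using lg_add[of l1 l2] ll by simp
      have Wl: "W ^ lg l \<le> W * W ^ lg (max l1 l2)"
        using power_increasing[OF lgl, of W] assms by simp
      show ?thesis
      proof (cases "l2 \<le> l1")
        case True
        have "card (lang (Times r1 r2)) * W ^ lg l \<le> card ?R1 * card ?R2 * (W * W ^ lg l1)"
          using cc Wl True by (intro mult_le_mono) (auto simp: max_def)
        also have "\<dots> = (card ?R1 * W ^ lg l1) * card ?R2 * W" by simp
        also have "\<dots> \<le> (rpn_len r1 * W ^ (l1 - 1)) * W ^ (l2 - 1) * W"
          by (rule mult_le_mono[OF mult_le_mono[OF IH1 c2] order.refl])
        also have "\<dots> = rpn_len r1 * W ^ (l - 1)"
          using False ll pow_split[of l1 l2 W] by (simp add: mult.assoc mult.commute mult.left_commute)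
        also have "\<dots> \<le> rpn_len (Times r1 r2) * W ^ (l - 1)" by (intro mult_le_mono1) simp
        finally show ?thesis .
      next
        case nle: False
        have "card (lang (Times r1 r2)) * W ^ lg l \<le> card ?R1 * card ?R2 * (W * W ^ lg l2)"
          using cc Wl nle by (intro mult_le_mono) (auto simp: max_def)
        also have "\<dots> = (card ?R2 * W ^ lg l2) * card ?R1 * W" by simp
        also have "\<dots> \<le> (rpn_len r2 * W ^ (l2 - 1)) * W ^ (l1 - 1) * W"
          by (rule mult_le_mono[OF mult_le_mono[OF IH2 c1] order.refl])
        also have "\<dots> = rpn_len r2 * W ^ (l - 1)"
          using False ll pow_split[of l1 l2 W] by (simp add: mult.assoc mult.commute mult.left_commute)
        also have "\<dots> \<le> rpn_len (Times r1 r2) * W ^ (l - 1)" by (intro mult_le_mono1) simp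
        finally show ?thesis .
      qed
    qed
  qed
qed

lemma LB_eq:
  assumes "W \<ge> 1" "l \<ge> 1" "s < W" "lang r = Mset W l s"
  shows "W ^ lg l \<le> rpn_len r"
proof -
  have "card (lang r) = W ^ (l - 1)" using card_Mset[OF assms(1,3), of "l - 1"] assms by simp
  moreover have "card (lang r) * W ^ lg l \<le> rpn_len r * W ^ (l - 1)" using LB[OF assms(1,2), of r s] assms(4)
    by simp
  ultimately have "W ^ lg l * W ^ (l - 1) \<le> rpn_len r * W ^ (l - 1)"
    by (simp add: mult.commute)
  moreover have "W ^ (l - 1) > 0" using assms by simp
  ultimately show ?thesis using mult_le_cancel2 by blast
qed

fun pw :: "'a rexp \<Rightarrow> nat \<Rightarrow> 'a rexp" where
  "pw r 0 = One" | "pw r (Suc k) = Times r (pw r k)"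

lemma lang_pw: "lang (pw r k) = {concat ws | ws. length ws = k \<and> set ws \<subseteq> lang r}"
proof (induction k)
  case 0 then show ?case by auto
next
  case (Suc k)
  show ?case
  proof
    show "lang (pw r (Suc k)) \<subseteq> {concat ws |ws. length ws = Suc k \<and> set ws \<subseteq> lang r}"
    proof
      fix x assume "x \<in> lang (pw r (Suc k))"
      then obtain u v where "x = u @ v" "u \<in> lang r" "v \<in> lang (pw r k)" by (auto simp: conc_def)
      then obtain ws where "v = concat ws" "length ws = k" "set ws \<subseteq> lang r" using Suc by auto
      then show "x \<in> {concat ws |ws. length ws = Suc k \<and> set ws \<subseteq> lang r}"
        using \<open>x = u @ v\<close> \<open>u \<in> lang r\<close> by (intro CollectI exI[of _ "u # ws"]) auto
    qed
    show "{concat ws |ws. length ws = Suc k \<and> set ws \<subseteq> lang r} \<subseteq> lang (pw r (Suc k))"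
    proof
      fix x assume "x \<in> {concat ws |ws. length ws = Suc k \<and> set ws \<subseteq> lang r}"
      then obtain ws where ws: "x = concat ws" "length ws = Suc k" "set ws \<subseteq> lang r" by auto
      then obtain u ws' where "ws = u # ws'" by (cases ws) auto
      then show "x \<in> lang (pw r (Suc k))" using ws Suc by (auto simp: conc_def)
    qed
  qed
qed

lemma rpn_len_pw: "rpn_len (pw r k) = k * (rpn_len r + 1) + 1"
  by (induction k) auto

lemma starfree_pw: "starfree r \<Longrightarrow> starfree (pw r k)"
  by (induction k) auto

lemma star_single: "x \<in> star {u} \<longleftrightarrow> (\<exists>t. x = concat (replicate t u))"
proof
  assume "x \<in> star {u}"
  then show "\<exists>t. x = concat (replicate t u)"
  proof (induction rule: star.induct)
    case star_Nil then show ?case by (intro exI[of _ 0]) simp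
  next
    case (star_app u' v)
    then obtain t where "v = concat (replicate t u)" by blast
    then show ?case using star_app by (intro exI[of _ "Suc t"]) simp
  qed
next
  assume "\<exists>t. x = concat (replicate t u)"
  then obtain t where "x = concat (replicate t u)" by blast
  then show "x \<in> star {u}" by (induction t arbitrary: x) (auto intro: star.intros)
qed

lemma concat_replicate_rep: "concat (replicate t (replicate W a)) = replicate (t * W) a"
  by (induction t) (auto simp: replicate_add)

lemma map_preimage: "set ws \<subseteq> f ` A \<Longrightarrow> \<exists>as. ws = map f as \<and> set as \<subseteq> A"
proof (induction ws)
  case Nil then show ?case by simp
next
  case (Cons w ws)
  then obtain as where "ws = map f as" "set as \<subseteq> A" by auto
  moreover obtain a where "w = f a" "a \<in> A" using Cons.prems by auto
  ultimately show ?case by (intro exI[of _ "a # as"]) auto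
qed

lemma sum_list_bound: "\<forall>x\<in>set xs. x \<le> (c::nat) \<Longrightarrow> sum_list xs \<le> length xs * c"
  by (induction xs) auto

definition cl :: "nat \<Rightarrow> nat" where "cl j = 3 * (j + 1)"

definition blk :: "nat \<Rightarrow> nat list" where "blk j = [cl j] @ replicate j 0"

fun G :: "nat \<Rightarrow> nat \<Rightarrow> nat rexp" where
  "G W 0 = Zero"
| "G W (Suc m) = Plus (Atom (cl (W - Suc m))) (Times (G W m) (Atom 0))"

lemma lang_G: "m \<le> W \<Longrightarrow> lang (G W m) = {[cl j] @ replicate (j + m - W) 0 | j. W - m \<le> j \<and> j < W}"
proof (induction m)
  case 0 then show ?case by auto
next
  case (Suc m)
  have IH: "lang (G W m) = {[cl j] @ replicate (j + m - W) 0 | j. W - m \<le> j \<and> j < W}" using Suc by simp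
  show ?case
  proof
    show "lang (G W (Suc m)) \<subseteq> {[cl j] @ replicate (j + Suc m - W) 0 |j. W - Suc m \<le> j \<and> j < W}"
    proof
      fix x assume "x \<in> lang (G W (Suc m))"
      then consider "x = [cl (W - Suc m)]" | u where "x = u @ [0]" "u \<in> lang (G W m)"
        by (auto simp: conc_def)
      then show "x \<in> {[cl j] @ replicate (j + Suc m - W) 0 |j. W - Suc m \<le> j \<and> j < W}"
      proof cases
        case 1 then show ?thesis using Suc.prems by (intro CollectI exI[of _ "W - Suc m"]) auto
      next
        case 2
        then obtain j where j: "u = [cl j] @ replicate (j + m - W) 0" "W - m \<le> j" "j < W" using IH by auto
        have "replicate (j + m - W) 0 @ [0] = replicate (j + Suc m - W) (0::nat)"
          using j Suc.prems by (simp add: replicate_append_same[symmetric] Suc_diff_le)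
        then show ?thesis using 2 j by (intro CollectI exI[of _ j]) auto
      qed
    qed
    show "{[cl j] @ replicate (j + Suc m - W) 0 |j. W - Suc m \<le> j \<and> j < W} \<subseteq> lang (G W (Suc m))"
    proof
      fix x assume "x \<in> {[cl j] @ replicate (j + Suc m - W) 0 |j. W - Suc m \<le> j \<and> j < W}"
      then obtain j where j: "x = [cl j] @ replicate (j + Suc m - W) 0" "W - Suc m \<le> j" "j < W" by auto
      show "x \<in> lang (G W (Suc m))"
      proof (cases "j = W - Suc m")
        case True then show ?thesis using j Suc.prems by auto
      next
        case False
        then have j2: "W - m \<le> j" using j by auto
        have "x = ([cl j] @ replicate (j + m - W) 0) @ [0]"
          using j j2 Suc.prems by (simp add: replicate_append_same Suc_diff_le)
        moreover have "[cl j] @ replicate (j + m - W) 0 \<in> lang (G W m)" using IH j j2 by auto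
        ultimately show ?thesis by (auto simp: conc_def)
      qed
    qed
  qed
qed

definition blockre :: "nat \<Rightarrow> nat rexp" where "blockre W = G W W"

lemma lang_blockre: "lang (blockre W) = blk ` {..<W}"
  unfolding blockre_def using lang_G[of W W] by (auto simp: blk_def)

lemma rpn_len_G: "rpn_len (G W m) = 4 * m + 1"
  by (induction m) auto

lemma starfree_G: "starfree (G W m)" by (induction m) auto

lemma lang_pw_blockre: "lang (pw (blockre W) l) = {concat (map blk js) | js. length js = l \<and> (\<forall>j\<in>set js. j < W)}"
proof -
  have "{concat ws | ws. length ws = l \<and> set ws \<subseteq> blk ` {..<W}}
      = {concat (map blk js) | js. length js = l \<and> (\<forall>j\<in>set js. j < W)}"
  proof
    show "{concat ws | ws. length ws = l \<and> set ws \<subseteq> blk ` {..<W}}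
      \<subseteq> {concat (map blk js) | js. length js = l \<and> (\<forall>j\<in>set js. j < W)}"
    proof
      fix x assume "x \<in> {concat ws | ws. length ws = l \<and> set ws \<subseteq> blk ` {..<W}}"
      then obtain ws where ws: "x = concat ws" "length ws = l" "set ws \<subseteq> blk ` {..<W}" by auto
      then obtain js where "ws = map blk js" "\<forall>j\<in>set js. j < W"
        using map_preimage[OF ws(3)] by auto
      then show "x \<in> {concat (map blk js) | js. length js = l \<and> (\<forall>j\<in>set js. j < W)}" using ws by auto
    qed
    show "{concat (map blk js) | js. length js = l \<and> (\<forall>j\<in>set js. j < W)} \<subseteq> {concat ws | ws. length ws = l \<and> set ws \<subseteq> blk ` {..<W}}"
    proof
      fix x assume "x \<in> {concat (map blk js) | js. length js = l \<and> (\<forall>j\<in>set js. j < W)}"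
      then obtain js where "x = concat (map blk js)" "length js = l" "\<forall>j\<in>set js. j < W" by auto
      then show "x \<in> {concat ws | ws. length ws = l \<and> set ws \<subseteq> blk ` {..<W}}"
        by (intro CollectI exI[of _ "map blk js"]) auto
    qed
  qed
  then show ?thesis by (simp add: lang_pw lang_blockre)
qed

definition Sl :: "nat \<Rightarrow> nat \<Rightarrow> nat \<Rightarrow> nat list set" where
  "Sl W l N = {concat (map blk js) @ replicate (t * W) 0 | js t. length js = l \<and> (\<forall>j\<in>set js. j < W)
      \<and> l + sum_list js + t * W = N}"

definition hs :: "nat \<Rightarrow> nat \<Rightarrow> nat option option" where
  "hs W x = (if x = 0 then Some None else if x mod 3 = 0 \<and> 1 \<le> x div 3 \<and> x div 3 \<le> W then Some (Some (x div 3 - 1)) else None)"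

lemma length_concat_blk: "length (concat (map blk js)) = length js + sum_list js"
  by (induction js) (auto simp: blk_def)

lemma hs_blk: "j < W \<Longrightarrow> hw (hs W) (blk j) = [j] \<and> okw (hs W) (blk j)"
  by (auto simp: blk_def hs_def cl_def hl_def okw_def hw_def)

lemma hs_zeros: "hw (hs W) (replicate m 0) = [] \<and> okw (hs W) (replicate m 0)"
  by (induction m) (auto simp: hs_def hl_def)

lemma hs_concat: "\<forall>j\<in>set js. j < W \<Longrightarrow> hw (hs W) (concat (map blk js)) = js \<and> okw (hs W) (concat (map blk js))"
  by (induction js) (auto simp: hs_blk)

lemma hs_Sl:
  assumes "W \<ge> 1" "l * W \<le> N"
  shows "hw (hs W) ` {w \<in> Sl W l N. okw (hs W) w} = Mset W l ((N - l) mod W)"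
proof
  show "hw (hs W) ` {w \<in> Sl W l N. okw (hs W) w} \<subseteq> Mset W l ((N - l) mod W)"
  proof
    fix x assume "x \<in> hw (hs W) ` {w \<in> Sl W l N. okw (hs W) w}"
    then obtain js t where jt: "x = hw (hs W) (concat (map blk js) @ replicate (t * W) 0)"
      "length js = l" "\<forall>j\<in>set js. j < W" "l + sum_list js + t * W = N" unfolding Sl_def by auto
    then have "x = js" using hs_concat hs_zeros by auto
    moreover have "N - l = sum_list js + t * W" using jt(4) by simp
    then have "sum_list js mod W = (N - l) mod W" by simp
    ultimately show "x \<in> Mset W l ((N - l) mod W)" using jt by (auto simp: Mset_def)
  qed
  show "Mset W l ((N - l) mod W) \<subseteq> hw (hs W) ` {w \<in> Sl W l N. okw (hs W) w}"
  proof
    fix js assume js: "js \<in> Mset W l ((N - l) mod W)"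
    then have jl: "length js = l" "\<forall>j\<in>set js. j < W" "sum_list js mod W = (N - l) mod W" by (auto simp: Mset_def)
    have "\<forall>j\<in>set js. j \<le> W - 1" using jl(2) by fastforce
    then have "sum_list js \<le> l * (W - 1)" using sum_list_bound[of js "W - 1"] jl(1) by simp
    moreover have "l + l * (W - 1) = l * W" using assms(1) by (cases W) auto
    ultimately have le: "l + sum_list js \<le> N" using assms(2) by linarith
    have "W dvd (N - l) - sum_list js" using jl(3) le by (subst mod_eq_dvd_iff_nat[symmetric]) auto
    then obtain t where t: "N - l - sum_list js = t * W" by (auto simp: dvd_def mult.commute)
    define w where "w = concat (map blk js) @ replicate (t * W) 0"
    have eq: "l + sum_list js + t * W = N" using t le by simp
    have "w \<in> Sl W l N" unfolding Sl_def w_def using jl eq by blast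
    moreover have "okw (hs W) w \<and> hw (hs W) w = js" using hs_concat[OF jl(2)] hs_zeros by (auto simp: w_def)
    ultimately show "js \<in> hw (hs W) ` {w \<in> Sl W l N. okw (hs W) w}" by force
  qed
qed

definition Lc :: "nat \<Rightarrow> nat \<Rightarrow> nat rexp" where
  "Lc W l = Times (pw (blockre W) l) (Star (pw (Atom 0) W))"

lemma lang_pw_atom: "lang (pw (Atom a) k) = {replicate k a}"
  by (induction k) (auto simp: conc_def)

lemma lang_Lc: "{w \<in> lang (Lc W l). length w = N} = Sl W l N"
proof -
  have st: "star (lang (pw (Atom 0) W)) = {replicate (t * W) 0 | t. True}"
    by (auto simp: lang_pw_atom star_single concat_replicate_rep)
  have L: "lang (Lc W l) = {concat (map blk js) @ replicate (t * W) 0 | js t. length js = l \<and> (\<forall>j\<in>set js. j < W)}"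
  proof
    show "lang (Lc W l) \<subseteq> {concat (map blk js) @ replicate (t * W) 0 | js t. length js = l \<and> (\<forall>j\<in>set js. j < W)}"
    proof
      fix x assume "x \<in> lang (Lc W l)"
      then obtain u v where uv: "x = u @ v" "u \<in> lang (pw (blockre W) l)" "v \<in> star (lang (pw (Atom 0) W))"
        unfolding Lc_def by (auto simp: conc_def)
      then obtain js where js: "u = concat (map blk js)" "length js = l" "\<forall>j\<in>set js. j < W"
        by (auto simp: lang_pw_blockre)
      obtain t where "v = replicate (t * W) 0" using uv(3) st by auto
      then show "x \<in> {concat (map blk js) @ replicate (t * W) 0 | js t. length js = l \<and> (\<forall>j\<in>set js. j < W)}"
        using uv js by blast
    qed
    show "{concat (map blk js) @ replicate (t * W) 0 | js t. length js = l \<and> (\<forall>j\<in>set js. j < W)} \<subseteq> lang (Lc W l)"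
    proof
      fix x assume "x \<in> {concat (map blk js) @ replicate (t * W) 0 | js t. length js = l \<and> (\<forall>j\<in>set js. j < W)}"
      then obtain js t where js: "x = concat (map blk js) @ replicate (t * W) 0" "length js = l" "\<forall>j\<in>set js. j < W"
        by auto
      have "concat (map blk js) \<in> lang (pw (blockre W) l)" using js by (auto simp: lang_pw_blockre)
      moreover have "replicate (t * W) 0 \<in> star (lang (pw (Atom 0) W))" using st by auto
      ultimately show "x \<in> lang (Lc W l)" using js unfolding Lc_def by (auto simp: conc_def)
    qed
  qed
  show ?thesis
  proof
    show "{w \<in> lang (Lc W l). length w = N} \<subseteq> Sl W l N"
    proof
      fix x assume "x \<in> {w \<in> lang (Lc W l). length w = N}"
      then obtain js t where js: "x = concat (map blk js) @ replicate (t * W) 0" "length js = l" "\<forall>j\<in>set js. j < W" "length x = N"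
        unfolding L by auto
      then have "l + sum_list js + t * W = N" by (simp add: length_concat_blk)
      then show "x \<in> Sl W l N" unfolding Sl_def using js by blast
    qed
    show "Sl W l N \<subseteq> {w \<in> lang (Lc W l). length w = N}"
    proof
      fix x assume "x \<in> Sl W l N"
      then obtain js t where js: "x = concat (map blk js) @ replicate (t * W) 0" "length js = l" "\<forall>j\<in>set js. j < W"
        "l + sum_list js + t * W = N" unfolding Sl_def by auto
      then have "x \<in> lang (Lc W l)" unfolding L by blast
      moreover have "length x = N" using js by (simp add: length_concat_blk)
      ultimately show "x \<in> {w \<in> lang (Lc W l). length w = N}" by simp
    qed
  qed
qed

lemma rpn_len_Lc: "rpn_len (Lc W l) = l * (4 * W + 2) + W * 2 + 4"
  by (simp add: Lc_def rpn_len_pw blockre_def rpn_len_G)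

definition csum :: "nat \<Rightarrow> nat rexp" where "csum W = sumre (map (\<lambda>j. Atom (cl j)) [0..<W])"

definition LA :: "nat \<Rightarrow> nat \<Rightarrow> nat \<Rightarrow> nat rexp" where
  "LA W l N = Times (pw (blockre W) l) (pw (Plus (pw (Atom 0) W) One) N)"

definition LB2 :: "nat \<Rightarrow> nat \<Rightarrow> nat rexp" where
  "LB2 W N = pw (Plus (csum W) (Atom 0)) N"

lemma lang_LB2: "lang (LB2 W N) = {w. length w = N \<and> set w \<subseteq> insert 0 (cl ` {..<W})}"
proof -
  have "lang (Plus (csum W) (Atom 0)) = (\<lambda>a. [a]) ` insert 0 (cl ` {..<W})"
    by (auto simp: csum_def)
  then have "lang (LB2 W N) = {concat ws |ws. length ws = N \<and> set ws \<subseteq> (\<lambda>a. [a]) ` insert 0 (cl ` {..<W})}"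
    by (simp add: LB2_def lang_pw)
  also have "\<dots> = {w. length w = N \<and> set w \<subseteq> insert 0 (cl ` {..<W})}"
  proof
    show "{concat ws |ws. length ws = N \<and> set ws \<subseteq> (\<lambda>a. [a]) ` insert 0 (cl ` {..<W})}
      \<subseteq> {w. length w = N \<and> set w \<subseteq> insert 0 (cl ` {..<W})}"
    proof
      fix x assume "x \<in> {concat ws |ws. length ws = N \<and> set ws \<subseteq> (\<lambda>a. [a]) ` insert 0 (cl ` {..<W})}"
      then obtain ws where ws: "x = concat ws" "length ws = N" "set ws \<subseteq> (\<lambda>a. [a]) ` insert 0 (cl ` {..<W})" by auto
      then obtain as where "ws = map (\<lambda>a. [a]) as" "set as \<subseteq> insert 0 (cl ` {..<W})"
        using map_preimage[OF ws(3)] by blast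
      moreover have "concat (map (\<lambda>a. [a]) as) = as" by (induction as) auto
      ultimately show "x \<in> {w. length w = N \<and> set w \<subseteq> insert 0 (cl ` {..<W})}" using ws by auto
    qed
    show "{w. length w = N \<and> set w \<subseteq> insert 0 (cl ` {..<W})}
      \<subseteq> {concat ws |ws. length ws = N \<and> set ws \<subseteq> (\<lambda>a. [a]) ` insert 0 (cl ` {..<W})}"
    proof
      fix w assume w: "w \<in> {w. length w = N \<and> set w \<subseteq> insert 0 (cl ` {..<W})}"
      have "concat (map (\<lambda>a. [a]) w) = w" by (induction w) auto
      then show "w \<in> {concat ws |ws. length ws = N \<and> set ws \<subseteq> (\<lambda>a. [a]) ` insert 0 (cl ` {..<W})}"
        using w by (intro CollectI exI[of _ "map (\<lambda>a. [a]) w"]) auto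
    qed
  qed
  finally show ?thesis .
qed

lemma pad_lang: "lang (pw (Plus (pw (Atom (0::nat)) W) One) Tn) = {replicate (t * W) 0 | t. t \<le> Tn}"
proof (induction Tn)
  case 0 then show ?case by auto
next
  case (Suc Tn)
  show ?case
  proof
    show "lang (pw (Plus (pw (Atom (0::nat)) W) One) (Suc Tn)) \<subseteq> {replicate (t * W) 0 |t. t \<le> Suc Tn}"
    proof
      fix x assume "x \<in> lang (pw (Plus (pw (Atom (0::nat)) W) One) (Suc Tn))"
      then obtain u v where uv: "x = u @ v" "u = replicate W 0 \<or> u = []" "v \<in> lang (pw (Plus (pw (Atom (0::nat)) W) One) Tn)"
        by (auto simp: conc_def lang_pw_atom)
      have "v \<in> {replicate (t * W) 0 |t. t \<le> Tn}" using uv(3) unfolding Suc.IH .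
      then obtain t where t: "v = replicate (t * W) 0" "t \<le> Tn" by blast
      show "x \<in> {replicate (t * W) 0 |t. t \<le> Suc Tn}"
      proof (cases "u = []")
        case True then show ?thesis using uv t by auto
      next
        case False
        then have "x = replicate (Suc t * W) 0" using uv t by (simp add: replicate_add)
        then show ?thesis using t by (intro CollectI exI[of _ "Suc t"]) auto
      qed
    qed
    show "{replicate (t * W) 0 |t. t \<le> Suc Tn} \<subseteq> lang (pw (Plus (pw (Atom (0::nat)) W) One) (Suc Tn))"
    proof
      fix x assume "x \<in> {replicate (t * W) (0::nat) |t. t \<le> Suc Tn}"
      then obtain t where t: "x = replicate (t * W) 0" "t \<le> Suc Tn" by auto
      show "x \<in> lang (pw (Plus (pw (Atom (0::nat)) W) One) (Suc Tn))"
      proof (cases t)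
        case 0 then show ?thesis using t Suc by (auto simp: conc_def intro!: exI[of _ "[]"])
      next
        case (Suc t')
        then have "x = replicate W 0 @ replicate (t' * W) 0" using t by (simp add: replicate_add)
        then show ?thesis using Suc t \<open>_ = {replicate (t * W) 0 |t. t \<le> Tn}\<close>
          by (auto simp: conc_def lang_pw_atom)
      qed
    qed
  qed
qed

lemma set_blk: "j < W \<Longrightarrow> set (blk j) \<subseteq> insert 0 (cl ` {..<W})"
  by (auto simp: blk_def)

lemma set_concat_blk: "\<forall>j\<in>set js. j < W \<Longrightarrow> set (concat (map blk js)) \<subseteq> insert 0 (cl ` {..<W})"
  using set_blk by fastforce

lemma lang_LA_LB2: "W \<ge> 1 \<Longrightarrow> lang (LA W l N) \<inter> lang (LB2 W N) = Sl W l N"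
proof
  assume W: "W \<ge> 1"
  show "lang (LA W l N) \<inter> lang (LB2 W N) \<subseteq> Sl W l N"
  proof
    fix x assume x: "x \<in> lang (LA W l N) \<inter> lang (LB2 W N)"
    then obtain js t where jt: "x = concat (map blk js) @ replicate (t * W) 0" "length js = l" "\<forall>j\<in>set js. j < W"
      by (auto simp: LA_def pad_lang lang_pw_blockre conc_def)
    have "length x = N" using x by (simp add: lang_LB2)
    then show "x \<in> Sl W l N" unfolding Sl_def using jt by (auto simp: length_concat_blk)
  qed
  show "Sl W l N \<subseteq> lang (LA W l N) \<inter> lang (LB2 W N)"
  proof
    fix x assume "x \<in> Sl W l N"
    then obtain js t where jt: "x = concat (map blk js) @ replicate (t * W) 0" "length js = l"
      "\<forall>j\<in>set js. j < W" "l + sum_list js + t * W = N" unfolding Sl_def by auto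
    have "t \<le> N" using jt(4) W by (metis le_add2 le_trans mult_le_mono2 mult_1_right mult.commute)
    then have "x \<in> lang (LA W l N)" using jt by (auto simp: LA_def pad_lang lang_pw_blockre conc_def)
    moreover have "x \<in> lang (LB2 W N)" using jt set_concat_blk[OF jt(3)]
      by (auto simp: lang_LB2 length_concat_blk add.assoc)
    ultimately show "x \<in> lang (LA W l N) \<inter> lang (LB2 W N)" by simp
  qed
qed

lemma sumre_simps[simp]: "sumre [] = Zero" "sumre (r # rs) = Plus r (sumre rs)"
  by (auto simp: sumre_def)

lemma rpn_len_sumre_atoms: "rpn_len (sumre (map (\<lambda>j. Atom (f j)) xs)) = 2 * length xs + 1"
  by (induction xs) auto

lemma rpn_len_csum: "rpn_len (csum W) = 2 * W + 1"
  by (simp only: csum_def rpn_len_sumre_atoms) simp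

lemma rpn_len_LA: "rpn_len (LA W l N) = l * (4 * W + 2) + N * (2 * W + 4) + 3"
  by (simp add: LA_def rpn_len_pw blockre_def rpn_len_G algebra_simps)

lemma rpn_len_LB2: "rpn_len (LB2 W N) = N * (2 * W + 4) + 1"
  by (simp add: LB2_def rpn_len_pw rpn_len_csum algebra_simps)

lemma starfree_sumre: "\<forall>r\<in>set rs. starfree r \<Longrightarrow> starfree (sumre rs)"
  by (induction rs) auto

lemma starfree_csum: "starfree (csum W)"
  by (auto simp: csum_def intro!: starfree_sumre)

lemma starfree_LA: "starfree (LA W l N)" and starfree_LB2: "starfree (LB2 W N)"
  by (auto simp: LA_def LB2_def blockre_def starfree_G starfree_pw starfree_csum)

lemma slice_LB:
  assumes "W \<ge> 1" "l \<ge> 1" "l * W \<le> N" "lang r = Sl W l N"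
  shows "W ^ lg l \<le> rpn_len r"
proof -
  have "lang (hom (hs W) r) = Mset W l ((N - l) mod W)" using hs_Sl[OF assms(1,3)] assms(4) by (simp add: lang_hom)
  moreover have "(N - l) mod W < W" using assms(1) by simp
  ultimately have "W ^ lg l \<le> rpn_len (hom (hs W) r)" using LB_eq[OF assms(1,2)] by blast
  then show ?thesis by simp
qed

section \<open>Shuffle part\<close>

lemma shuffles_append: "z1 \<in> shuffles x1 y1 \<Longrightarrow> z2 \<in> shuffles x2 y2 \<Longrightarrow> z1 @ z2 \<in> shuffles (x1 @ x2) (y1 @ y2)"
proof (induction z1 arbitrary: x1 y1)
  case Nil then show ?case by simp
next
  case (Cons c z1)
  from Cons.prems(1) consider x1' where "x1 = c # x1'" "z1 \<in> shuffles x1' y1" | y1' where "y1 = c # y1'" "z1 \<in> shuffles x1 y1'"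
    by (auto simp: Cons_in_shuffles_iff neq_Nil_conv)
  then show ?case
  proof cases
    case 1 then show ?thesis using Cons.IH[OF _ Cons.prems(2)] by (auto intro: Cons_in_shuffles_leftI)
  next
    case 2 then show ?thesis using Cons.IH[OF _ Cons.prems(2)] by (auto intro: Cons_in_shuffles_rightI)
  qed
qed

lemma shuffles_sum: "z \<in> shuffles u v \<Longrightarrow> sum_list (map f z) = sum_list (map f u) + sum_list (map (f::'a \<Rightarrow> nat) v)"
proof -
  assume "z \<in> shuffles u v"
  then have "mset z = mset u + mset v" by (rule mset_shuffles)
  then have m: "mset (map f z) = mset (map f u) + mset (map f v)" by simp
  have "sum_list (map f z) = sum_mset (mset (map f z))" by (simp only: sum_mset_sum_list)
  also have "\<dots> = sum_mset (mset (map f u) + mset (map f v))" by (simp only: m)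
  also have "\<dots> = sum_mset (mset (map f u)) + sum_mset (mset (map f v))" by (rule sum_mset.union)
  also have "\<dots> = sum_list (map f u) + sum_list (map f v)" by (simp only: sum_mset_sum_list)
  finally show ?thesis .
qed

lemma decl_map: "decl pos 0 z \<Longrightarrow> map pos z = [0..<length z]"
  by (intro nth_equalityI) (auto simp: decl_def)

lemma shuffles_decl_disjoint:
  assumes "z \<in> shuffles u v" "decl pos 0 z" "p \<in> pos ` set u" "p \<in> pos ` set v"
  shows False
proof -
  have "mset (map pos z) = mset (map pos u) + mset (map pos v)" using mset_shuffles[OF assms(1)] by simp
  then have "count (mset (map pos z)) p = count (mset (map pos u)) p + count (mset (map pos v)) p" by simp
  moreover have "count (mset (map pos u)) p \<ge> 1" "count (mset (map pos v)) p \<ge> 1" using assms(3,4)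
    by (auto simp: Suc_le_eq)
  moreover have "count (mset (map pos z)) p \<le> 1" using decl_map[OF assms(2)]
    by (metis distinct_count_atmost_1 distinct_upt le_eq_less_or_eq less_one)
  ultimately show False by linarith
qed

definition xl :: "nat \<Rightarrow> nat \<Rightarrow> nat \<Rightarrow> nat" where "xl W p d = 3 * (p * Suc W + d) + 1"
definition yl :: "nat \<Rightarrow> nat \<Rightarrow> nat \<Rightarrow> nat" where "yl W p d = 3 * (p * Suc W + d) + 2"
definition posb :: "nat \<Rightarrow> nat \<Rightarrow> nat" where "posb W x = (x div 3) div Suc W"
definition hdb :: "nat \<Rightarrow> nat \<Rightarrow> nat option option" where
  "hdb W x = (if (x div 3) mod Suc W = 0 then Some None else Some (Some ((x div 3) mod Suc W - 1)))"
definition restr :: "nat \<Rightarrow> nat option option" where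
  "restr x = (if x mod 3 = 0 then None else Some (Some x))"

lemma xl_div3: "xl W p d div 3 = p * Suc W + d" and yl_div3: "yl W p d div 3 = p * Suc W + d"
  by (simp_all add: xl_def yl_def)

lemma mod3_1: "(3 * n + 1) mod 3 = (1::nat)" and mod3_2: "(3 * n + 2) mod 3 = (2::nat)"
  by presburger+

lemma xl_mod3[simp]: "xl W p d mod 3 = 1" and yl_mod3[simp]: "yl W p d mod 3 = 2"
  unfolding xl_def yl_def by (rule mod3_1, rule mod3_2)

lemma divmod_gen: "(d::nat) < b \<Longrightarrow> (p * b + d) div b = p \<and> (p * b + d) mod b = d"
  by (simp add: add.commute)

lemma divmodW: "d \<le> W \<Longrightarrow> (p * Suc W + d) div Suc W = p \<and> (p * Suc W + d) mod Suc W = d"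
  using divmod_gen[of d "Suc W" p] by simp

lemma posb_xl[simp]: "d \<le> W \<Longrightarrow> posb W (xl W p d) = p" and posb_yl[simp]: "d \<le> W \<Longrightarrow> posb W (yl W p d) = p"
  unfolding posb_def xl_div3 yl_div3 using divmodW by blast+

lemma hdb_xl: "d \<le> W \<Longrightarrow> hl (hdb W) (xl W p d) = (if d = 0 then [] else [d - 1])"
  and hdb_yl: "d \<le> W \<Longrightarrow> hl (hdb W) (yl W p d) = (if d = 0 then [] else [d - 1])"
  unfolding hdb_def hl_def xl_div3 yl_div3 using divmodW[of d W p] by simp_all

lemma okw_hdb[simp]: "okw (hdb W) w" by (auto simp: okw_def hdb_def)

lemma hl_hdb_bound: "x \<in> set (hl (hdb W) a) \<Longrightarrow> x < W"
proof -
  assume x: "x \<in> set (hl (hdb W) a)"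
  define d where "d = (a div 3) mod Suc W"
  have dl: "d < Suc W" unfolding d_def by simp
  have "x = d - 1 \<and> d \<noteq> 0" using x unfolding d_def by (auto simp: hl_def hdb_def split: if_splits)
  then show ?thesis using dl by linarith
qed

lemma three_inj: "3 * (x::nat) + c = 3 * y + c \<Longrightarrow> x = y" by simp

lemma xl_inj: "xl W p d = xl W p' d' \<Longrightarrow> d \<le> W \<Longrightarrow> d' \<le> W \<Longrightarrow> p = p' \<and> d = d'"
proof -
  assume a: "xl W p d = xl W p' d'" "d \<le> W" "d' \<le> W"
  then have "p * Suc W + d = p' * Suc W + d'" using three_inj[OF a(1)[unfolded xl_def]] by simp
  then show ?thesis using divmodW[OF a(2), of p] divmodW[OF a(3), of p'] by metis
qed

definition dX :: "nat \<Rightarrow> nat \<Rightarrow> nat \<Rightarrow> nat" where "dX W a b = (b + W - a) mod W + 1"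

lemma dX_le: "W \<ge> 1 \<Longrightarrow> dX W a b \<le> W" and dX_pos: "dX W a b \<noteq> 0"
  by (simp_all add: dX_def Suc_le_eq)

definition xwin :: "nat \<Rightarrow> nat \<Rightarrow> nat \<Rightarrow> nat \<Rightarrow> nat list" where
  "xwin W k q d = map (\<lambda>j. xl W (k * Suc W + j) 0) (filter (\<lambda>j. j \<noteq> q) [0..<W]) @ [xl W (k * Suc W + W) d]"

definition ylet :: "nat \<Rightarrow> nat \<Rightarrow> nat \<Rightarrow> nat \<Rightarrow> nat" where "ylet W k q d = yl W (k * Suc W + q) d"

fun prodre :: "'a rexp list \<Rightarrow> 'a rexp" where
  "prodre [] = One" | "prodre (r # rs) = Times r (prodre rs)"

lemma lang_prodre_append: "lang (prodre (xs @ ys)) = conc (lang (prodre xs)) (lang (prodre ys))"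
proof (induction xs)
  case Nil then show ?case by (auto simp: conc_def)
next
  case (Cons x xs)
  then show ?case by (auto simp: conc_def) (metis append.assoc)+
qed

lemma lang_prodre_single: "lang (prodre [r]) = lang r" by (auto simp: conc_def)

definition Xblock :: "nat \<Rightarrow> nat \<Rightarrow> nat rexp" where
  "Xblock W i = sumre (map (\<lambda>a. Times (wre (xwin W (2*i) a 0))
       (sumre (map (\<lambda>b. wre (xwin W (2*i+1) b (dX W a b))) [0..<W]))) [0..<W])"

definition Xre :: "nat \<Rightarrow> nat \<Rightarrow> nat rexp" where
  "Xre W m = Times (prodre (map (Xblock W) [0..<m])) (wre (xwin W (2*m) 0 0))"

definition Yblock :: "nat \<Rightarrow> nat \<Rightarrow> nat rexp" where
  "Yblock W i = sumre (map (\<lambda>a. Times (Atom (ylet W (2*i+1) a 0))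
       (sumre (map (\<lambda>b. Atom (ylet W (2*i+2) b (dX W a b))) [0..<W]))) [0..<W])"

definition Yre :: "nat \<Rightarrow> nat \<Rightarrow> nat rexp" where
  "Yre W m = Times (Atom (ylet W 0 0 0)) (prodre (map (Yblock W) [0..<m]))"

lemma lang_Xblock: "lang (Xblock W i) = {xwin W (2*i) a 0 @ xwin W (2*i+1) b (dX W a b) | a b. a < W \<and> b < W}"
proof
  show "lang (Xblock W i) \<subseteq> {xwin W (2*i) a 0 @ xwin W (2*i+1) b (dX W a b) | a b. a < W \<and> b < W}"
  proof
    fix w assume "w \<in> lang (Xblock W i)"
    then obtain a b where "a < W" "b < W" "w = xwin W (2*i) a 0 @ xwin W (2*i+1) b (dX W a b)"
      by (auto simp: Xblock_def conc_def)
    then show "w \<in> {xwin W (2*i) a 0 @ xwin W (2*i+1) b (dX W a b) | a b. a < W \<and> b < W}" by blast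
  qed
  show "{xwin W (2*i) a 0 @ xwin W (2*i+1) b (dX W a b) | a b. a < W \<and> b < W} \<subseteq> lang (Xblock W i)"
  proof
    fix w assume "w \<in> {xwin W (2*i) a 0 @ xwin W (2*i+1) b (dX W a b) | a b. a < W \<and> b < W}"
    then obtain a b where ab: "a < W" "b < W" "w = xwin W (2*i) a 0 @ xwin W (2*i+1) b (dX W a b)" by blast
    have "w \<in> lang (Times (wre (xwin W (2*i) a 0)) (sumre (map (\<lambda>b. wre (xwin W (2*i+1) b (dX W a b))) [0..<W])))"
      using ab by (auto simp: conc_def)
    then show "w \<in> lang (Xblock W i)" unfolding Xblock_def using ab(1) by (simp only: lang_sumre) auto
  qed
qed

lemma lang_Yblock: "lang (Yblock W i) = {[ylet W (2*i+1) a 0, ylet W (2*i+2) b (dX W a b)] | a b. a < W \<and> b < W}"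
proof
  show "lang (Yblock W i) \<subseteq> {[ylet W (2*i+1) a 0, ylet W (2*i+2) b (dX W a b)] | a b. a < W \<and> b < W}"
  proof
    fix w assume "w \<in> lang (Yblock W i)"
    then obtain a b where "a < W" "b < W" "w = [ylet W (2*i+1) a 0, ylet W (2*i+2) b (dX W a b)]"
      by (auto simp: Yblock_def conc_def)
    then show "w \<in> {[ylet W (2*i+1) a 0, ylet W (2*i+2) b (dX W a b)] | a b. a < W \<and> b < W}" by blast
  qed
  show "{[ylet W (2*i+1) a 0, ylet W (2*i+2) b (dX W a b)] | a b. a < W \<and> b < W} \<subseteq> lang (Yblock W i)"
  proof
    fix w assume "w \<in> {[ylet W (2*i+1) a 0, ylet W (2*i+2) b (dX W a b)] | a b. a < W \<and> b < W}"
    then obtain a b where ab: "a < W" "b < W" "w = [ylet W (2*i+1) a 0, ylet W (2*i+2) b (dX W a b)]" by blast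
    have "w \<in> lang (Times (Atom (ylet W (2*i+1) a 0)) (sumre (map (\<lambda>b. Atom (ylet W (2*i+2) b (dX W a b))) [0..<W])))"
      using ab by (auto simp: conc_def)
    then show "w \<in> lang (Yblock W i)" unfolding Yblock_def using ab(1) by (simp only: lang_sumre) auto
  qed
qed

definition xd :: "nat \<Rightarrow> (nat \<Rightarrow> nat) \<Rightarrow> nat \<Rightarrow> nat" where
  "xd W q k = (if odd k then dX W (q (k - 1)) (q k) else 0)"
definition yd :: "nat \<Rightarrow> (nat \<Rightarrow> nat) \<Rightarrow> nat \<Rightarrow> nat" where
  "yd W q k = (if even k \<and> k \<ge> 2 then dX W (q (k - 1)) (q k) else 0)"

definition uX :: "nat \<Rightarrow> (nat \<Rightarrow> nat) \<Rightarrow> nat list \<Rightarrow> nat list" where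
  "uX W q ks = concat (map (\<lambda>k. xwin W k (q k) (xd W q k)) ks)"
definition vY :: "nat \<Rightarrow> (nat \<Rightarrow> nat) \<Rightarrow> nat list \<Rightarrow> nat list" where
  "vY W q ks = concat (map (\<lambda>k. [ylet W k (q k) (yd W q k)]) ks)"

lemma uX_cong:
  assumes "\<forall>k. k \<in> set ks \<or> Suc k \<in> set ks \<longrightarrow> q k = q' k"
  shows "uX W q ks = uX W q' ks"
proof -
  have *: "xwin W k (q k) (xd W q k) = xwin W k (q' k) (xd W q' k)" if k: "k \<in> set ks" for k
  proof -
    have "q k = q' k" using assms k by blast
    moreover have "q (k - 1) = q' (k - 1)" if "odd k"
    proof -
      have "Suc (k - 1) = k" using that by (cases k) auto
      then show ?thesis using assms k by metis
    qed
    ultimately show ?thesis by (simp add: xd_def)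
  qed
  show ?thesis unfolding uX_def by (rule arg_cong[where f = concat], rule map_cong[OF refl]) (rule *)
qed

lemma vY_cong:
  assumes "\<forall>k. k \<in> set ks \<or> Suc k \<in> set ks \<longrightarrow> q k = q' k"
  shows "vY W q ks = vY W q' ks"
proof -
  have *: "[ylet W k (q k) (yd W q k)] = [ylet W k (q' k) (yd W q' k)]" if k: "k \<in> set ks" for k
  proof -
    have "q k = q' k" using assms k by blast
    moreover have "q (k - 1) = q' (k - 1)" if "k \<ge> 2"
    proof -
      have "Suc (k - 1) = k" using that by (cases k) auto
      then show ?thesis using assms k by metis
    qed
    ultimately show ?thesis by (simp add: yd_def)
  qed
  show ?thesis unfolding vY_def by (rule arg_cong[where f = concat], rule map_cong[OF refl]) (rule *)
qed

lemma uX_append: "uX W q (xs @ ys) = uX W q xs @ uX W q ys" by (simp add: uX_def)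
lemma vY_append: "vY W q (xs @ ys) = vY W q xs @ vY W q ys" by (simp add: vY_def)
lemma uX_single: "uX W q [k] = xwin W k (q k) (xd W q k)" by (simp add: uX_def)
lemma vY_single: "vY W q [k] = [ylet W k (q k) (yd W q k)]" by (simp add: vY_def)

lemma upt_2m: "[0..<2 * Suc m] = [0..<2*m] @ [2*m, 2*m+1]" by simp
lemma upt_2m1: "[Suc 0..<Suc (2 * Suc m)] = [Suc 0..<Suc (2*m)] @ [2*m+1, 2*m+2]" by simp

lemma lang_Xprod: "lang (prodre (map (Xblock W) [0..<m])) = {uX W q [0..<2*m] | q. \<forall>k<2*m. q k < W}"
proof (induction m)
  case 0 then show ?case by (auto simp: uX_def)
next
  case (Suc m)
  have split: "map (Xblock W) [0..<Suc m] = map (Xblock W) [0..<m] @ [Xblock W m]" by simp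
  show ?case
  proof
    show "lang (prodre (map (Xblock W) [0..<Suc m])) \<subseteq> {uX W q [0..<2 * Suc m] |q. \<forall>k<2 * Suc m. q k < W}"
    proof
      fix w assume "w \<in> lang (prodre (map (Xblock W) [0..<Suc m]))"
      then obtain u a b where w: "w = u @ xwin W (2*m) a 0 @ xwin W (2*m+1) b (dX W a b)"
        "u \<in> lang (prodre (map (Xblock W) [0..<m]))" "a < W" "b < W"
        unfolding split lang_prodre_append lang_prodre_single lang_Xblock by (auto simp: conc_def)
      then obtain q where q: "u = uX W q [0..<2*m]" "\<forall>k<2*m. q k < W" using Suc.IH by auto
      define q' where "q' = q(2*m := a, 2*m+1 := b)"
      have "uX W q' [0..<2*m] = uX W q [0..<2*m]" by (rule uX_cong) (auto simp: q'_def)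
      moreover have "xd W q' (2*m) = 0" "xd W q' (2*m+1) = dX W a b" by (auto simp: xd_def q'_def)
      ultimately have "w = uX W q' [0..<2 * Suc m]" using w q
        by (simp only: upt_2m uX_append uX_single) (simp add: uX_def q'_def)
      moreover have "\<forall>k<2 * Suc m. q' k < W" using q w by (auto simp: q'_def)
      ultimately show "w \<in> {uX W q [0..<2 * Suc m] |q. \<forall>k<2 * Suc m. q k < W}" by blast
    qed
    show "{uX W q [0..<2 * Suc m] |q. \<forall>k<2 * Suc m. q k < W} \<subseteq> lang (prodre (map (Xblock W) [0..<Suc m]))"
    proof
      fix w assume "w \<in> {uX W q [0..<2 * Suc m] |q. \<forall>k<2 * Suc m. q k < W}"
      then obtain q where q: "w = uX W q [0..<2 * Suc m]" "\<forall>k<2 * Suc m. q k < W" by blast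
      have "uX W q [0..<2*m] \<in> lang (prodre (map (Xblock W) [0..<m]))" using Suc.IH q by auto
      moreover have "xd W q (2*m) = 0" "xd W q (2*m+1) = dX W (q (2*m)) (q (2*m+1))" by (auto simp: xd_def)
      then have "uX W q [2*m, 2*m+1] = xwin W (2*m) (q (2*m)) 0 @ xwin W (2*m+1) (q (2*m+1)) (dX W (q (2*m)) (q (2*m+1)))"
        by (simp add: uX_def)
      then have "uX W q [2*m, 2*m+1] \<in> lang (Xblock W m)" using q unfolding lang_Xblock
        by (intro CollectI exI[of _ "q (2*m)"] exI[of _ "q (2*m+1)"]) auto
      moreover have "w = uX W q [0..<2*m] @ uX W q [2*m, 2*m+1]" using q by (simp only: upt_2m uX_append)
      ultimately show "w \<in> lang (prodre (map (Xblock W) [0..<Suc m]))"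
        unfolding split lang_prodre_append lang_prodre_single conc_def by blast
    qed
  qed
qed

lemma lang_Xre: "lang (Xre W m) = {uX W q [0..<Suc (2*m)] | q. (\<forall>k<2*m. q k < W) \<and> q (2*m) = 0}"
proof
  show "lang (Xre W m) \<subseteq> {uX W q [0..<Suc (2*m)] | q. (\<forall>k<2*m. q k < W) \<and> q (2*m) = 0}"
  proof
    fix w assume "w \<in> lang (Xre W m)"
    then obtain q where q: "w = uX W q [0..<2*m] @ xwin W (2*m) 0 0" "\<forall>k<2*m. q k < W"
      unfolding Xre_def by (auto simp: conc_def lang_Xprod)
    define q' where "q' = q(2*m := 0)"
    have "uX W q' [0..<2*m] = uX W q [0..<2*m]" by (rule uX_cong) (auto simp: q'_def)
    moreover have "xd W q' (2*m) = 0" by (auto simp: xd_def)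
    ultimately have "w = uX W q' [0..<Suc (2*m)]" using q by (simp add: uX_append uX_single q'_def)
    then show "w \<in> {uX W q [0..<Suc (2*m)] | q. (\<forall>k<2*m. q k < W) \<and> q (2*m) = 0}"
      using q by (auto simp: q'_def)
  qed
  show "{uX W q [0..<Suc (2*m)] | q. (\<forall>k<2*m. q k < W) \<and> q (2*m) = 0} \<subseteq> lang (Xre W m)"
  proof
    fix w assume "w \<in> {uX W q [0..<Suc (2*m)] | q. (\<forall>k<2*m. q k < W) \<and> q (2*m) = 0}"
    then obtain q where q: "w = uX W q [0..<Suc (2*m)]" "\<forall>k<2*m. q k < W" "q (2*m) = 0" by blast
    have "xd W q (2*m) = 0" by (auto simp: xd_def)
    then have "w = uX W q [0..<2*m] @ xwin W (2*m) 0 0" using q by (simp add: uX_append uX_single)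
    then show "w \<in> lang (Xre W m)" using q unfolding Xre_def by (auto simp: conc_def lang_Xprod)
  qed
qed

lemma lang_Yprod: "lang (prodre (map (Yblock W) [0..<m])) = {vY W q [Suc 0..<Suc (2*m)] | q. q 0 = 0 \<and> (\<forall>k. 1 \<le> k \<and> k \<le> 2*m \<longrightarrow> q k < W)}"
proof (induction m)
  case 0 then show ?case by (auto simp: vY_def intro: exI[of _ "\<lambda>_. 0"])
next
  case (Suc m)
  have split: "map (Yblock W) [0..<Suc m] = map (Yblock W) [0..<m] @ [Yblock W m]" by simp
  show ?case
  proof
    show "lang (prodre (map (Yblock W) [0..<Suc m])) \<subseteq> {vY W q [Suc 0..<Suc (2 * Suc m)] |q. q 0 = 0 \<and> (\<forall>k. 1 \<le> k \<and> k \<le> 2 * Suc m \<longrightarrow> q k < W)}"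
    proof
      fix w assume "w \<in> lang (prodre (map (Yblock W) [0..<Suc m]))"
      then obtain u a b where w: "w = u @ [ylet W (2*m+1) a 0, ylet W (2*m+2) b (dX W a b)]"
        "u \<in> lang (prodre (map (Yblock W) [0..<m]))" "a < W" "b < W"
        unfolding split lang_prodre_append lang_prodre_single lang_Yblock by (auto simp: conc_def)
      then obtain q where q: "u = vY W q [Suc 0..<Suc (2*m)]" "q 0 = 0" "\<forall>k. 1 \<le> k \<and> k \<le> 2*m \<longrightarrow> q k < W"
        using Suc.IH by auto
      define q' where "q' = q(2*m+1 := a, 2*m+2 := b)"
      have "vY W q' [Suc 0..<Suc (2*m)] = vY W q [Suc 0..<Suc (2*m)]" by (rule vY_cong) (auto simp: q'_def)
      moreover have "yd W q' (2*m+1) = 0" "yd W q' (2*m+2) = dX W a b" by (auto simp: yd_def q'_def)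
      ultimately have "w = vY W q' [Suc 0..<Suc (2 * Suc m)]" using w q
        by (simp only: upt_2m1 vY_append) (simp add: vY_def q'_def)
      moreover have "q' 0 = 0" "\<forall>k. 1 \<le> k \<and> k \<le> 2 * Suc m \<longrightarrow> q' k < W" using q w by (auto simp: q'_def)
      ultimately show "w \<in> {vY W q [Suc 0..<Suc (2 * Suc m)] |q. q 0 = 0 \<and> (\<forall>k. 1 \<le> k \<and> k \<le> 2 * Suc m \<longrightarrow> q k < W)}" by blast
    qed
    show "{vY W q [Suc 0..<Suc (2 * Suc m)] |q. q 0 = 0 \<and> (\<forall>k. 1 \<le> k \<and> k \<le> 2 * Suc m \<longrightarrow> q k < W)} \<subseteq> lang (prodre (map (Yblock W) [0..<Suc m]))"
    proof
      fix w assume "w \<in> {vY W q [Suc 0..<Suc (2 * Suc m)] |q. q 0 = 0 \<and> (\<forall>k. 1 \<le> k \<and> k \<le> 2 * Suc m \<longrightarrow> q k < W)}"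
      then obtain q where q: "w = vY W q [Suc 0..<Suc (2 * Suc m)]" "q 0 = 0" "\<forall>k. 1 \<le> k \<and> k \<le> 2 * Suc m \<longrightarrow> q k < W" by blast
      have "vY W q [Suc 0..<Suc (2*m)] \<in> lang (prodre (map (Yblock W) [0..<m]))" using Suc.IH q by auto
      moreover have "yd W q (2*m+1) = 0" "yd W q (2*m+2) = dX W (q (2*m+1)) (q (2*m+2))" by (auto simp: yd_def)
      then have "vY W q [2*m+1, 2*m+2] = [ylet W (2*m+1) (q (2*m+1)) 0, ylet W (2*m+2) (q (2*m+2)) (dX W (q (2*m+1)) (q (2*m+2)))]"
        by (simp add: vY_def)
      then have "vY W q [2*m+1, 2*m+2] \<in> lang (Yblock W m)" using q unfolding lang_Yblock
        by (intro CollectI exI[of _ "q (2*m+1)"] exI[of _ "q (2*m+2)"]) auto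
      moreover have "w = vY W q [Suc 0..<Suc (2*m)] @ vY W q [2*m+1, 2*m+2]" using q by (simp only: upt_2m1 vY_append)
      ultimately show "w \<in> lang (prodre (map (Yblock W) [0..<Suc m]))"
        unfolding split lang_prodre_append lang_prodre_single conc_def by blast
    qed
  qed
qed

lemma lang_Yre: "lang (Yre W m) = {vY W q [0..<Suc (2*m)] | q. q 0 = 0 \<and> (\<forall>k. 1 \<le> k \<and> k \<le> 2*m \<longrightarrow> q k < W)}"
proof -
  have u: "[0..<Suc (2*m)] = [0] @ [Suc 0..<Suc (2*m)]" by (simp add: upt_conv_Cons)
  have v: "vY W q [0..<Suc (2*m)] = ylet W 0 0 0 # vY W q [Suc 0..<Suc (2*m)]" if "q 0 = 0" for q
    using that by (simp only: u vY_append vY_single) (simp add: yd_def)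
  show ?thesis
  proof
    show "lang (Yre W m) \<subseteq> {vY W q [0..<Suc (2*m)] | q. q 0 = 0 \<and> (\<forall>k. 1 \<le> k \<and> k \<le> 2*m \<longrightarrow> q k < W)}"
    proof
      fix w assume "w \<in> lang (Yre W m)"
      then obtain q where q: "w = ylet W 0 0 0 # vY W q [Suc 0..<Suc (2*m)]" "q 0 = 0" "\<forall>k. 1 \<le> k \<and> k \<le> 2*m \<longrightarrow> q k < W"
        unfolding Yre_def by (auto simp: conc_def lang_Yprod)
      have "w = vY W q [0..<Suc (2*m)]" using q(1) v[of q, OF q(2)] by simp
      then show "w \<in> {vY W q [0..<Suc (2*m)] | q. q 0 = 0 \<and> (\<forall>k. 1 \<le> k \<and> k \<le> 2*m \<longrightarrow> q k < W)}"
        using q by blast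
    qed
    show "{vY W q [0..<Suc (2*m)] | q. q 0 = 0 \<and> (\<forall>k. 1 \<le> k \<and> k \<le> 2*m \<longrightarrow> q k < W)} \<subseteq> lang (Yre W m)"
    proof
      fix w assume "w \<in> {vY W q [0..<Suc (2*m)] | q. q 0 = 0 \<and> (\<forall>k. 1 \<le> k \<and> k \<le> 2*m \<longrightarrow> q k < W)}"
      then obtain q where q: "w = vY W q [0..<Suc (2*m)]" "q 0 = 0" "\<forall>k. 1 \<le> k \<and> k \<le> 2*m \<longrightarrow> q k < W" by blast
      then have "w = [ylet W 0 0 0] @ vY W q [Suc 0..<Suc (2*m)]" using v[of q, OF q(2)] by simp
      moreover have "vY W q [Suc 0..<Suc (2*m)] \<in> lang (prodre (map (Yblock W) [0..<m]))"
        using q by (auto simp: lang_Yprod)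
      ultimately show "w \<in> lang (Yre W m)" unfolding Yre_def by (auto simp: conc_def)
    qed
  qed
qed

lemma filter_eq_c: "c < W \<Longrightarrow> filter (\<lambda>j. j = c) [0..<W] = [c]"
proof (induction W)
  case 0 then show ?case by simp
next
  case (Suc W)
  show ?case
  proof (cases "c < W")
    case True then show ?thesis using Suc by simp
  next
    case False
    then have "c = W" using Suc.prems by simp
    moreover have "filter (\<lambda>j. j = W) [0..<W] = []" by (auto simp: filter_empty_conv)
    ultimately show ?thesis by simp
  qed
qed

lemma length_filter_neq: "c < W \<Longrightarrow> length (filter (\<lambda>j. j \<noteq> c) [0..<W]) = W - 1"
proof -
  assume c: "c < W"
  have "length (filter (\<lambda>j. j \<noteq> c) [0..<W]) + length (filter (\<lambda>j. \<not> j \<noteq> c) [0..<W]) = W"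
    using sum_length_filter_compl[of "\<lambda>j. j \<noteq> c" "[0..<W]"] by simp
  moreover have "length (filter (\<lambda>j. \<not> j \<noteq> c) [0..<W]) = 1" using filter_eq_c[OF c] by simp
  ultimately show ?thesis by simp
qed

lemma length_xwin: "c < W \<Longrightarrow> length (xwin W k c d) = W"
  using length_filter_neq[of c W] by (simp add: xwin_def)

lemma length_uX: "(\<forall>k\<in>set ks. q k < W) \<Longrightarrow> length (uX W q ks) = length ks * W"
  by (induction ks) (auto simp: uX_def length_xwin)

lemma length_vY: "length (vY W q ks) = length ks"
  by (induction ks) (auto simp: vY_def)

definition SXY :: "nat \<Rightarrow> nat \<Rightarrow> nat list set" where
  "SXY W m = (\<Union>u\<in>lang (Xre W m). \<Union>v\<in>lang (Yre W m). shuffles u v)"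

lemma SXY_length: "W \<ge> 1 \<Longrightarrow> z \<in> SXY W m \<Longrightarrow> length z = Suc (2*m) * Suc W"
proof -
  assume W: "W \<ge> 1" and "z \<in> SXY W m"
  then obtain u v where uv: "u \<in> lang (Xre W m)" "v \<in> lang (Yre W m)" "z \<in> shuffles u v" by (auto simp: SXY_def)
  obtain qx where qx: "u = uX W qx [0..<Suc (2*m)]" "\<forall>k<2*m. qx k < W" "qx (2*m) = 0" using uv(1) by (auto simp: lang_Xre)
  obtain qy where qy: "v = vY W qy [0..<Suc (2*m)]" using uv(2) by (auto simp: lang_Yre)
  have "\<forall>k\<in>set [0..<Suc (2*m)]. qx k < W" using qx W by (auto simp: less_Suc_eq)
  then have "length u = Suc (2*m) * W" using qx(1) length_uX by simp
  moreover have "length v = Suc (2*m)" using qy by (simp add: length_vY)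
  ultimately show ?thesis using length_shuffles[OF uv(3)] by simp
qed

lemma set_xwin: "j < W \<Longrightarrow> j \<noteq> c \<Longrightarrow> xl W (k * Suc W + j) 0 \<in> set (xwin W k c d)"
  by (auto simp: xwin_def)

lemma set_uX: "k \<in> set ks \<Longrightarrow> j < W \<Longrightarrow> j \<noteq> q k \<Longrightarrow> xl W (k * Suc W + j) 0 \<in> set (uX W q ks)"
proof -
  assume a: "k \<in> set ks" "j < W" "j \<noteq> q k"
  have "xl W (k * Suc W + j) 0 \<in> set (xwin W k (q k) (xd W q k))" using a(2,3) by (rule set_xwin)
  then show ?thesis unfolding uX_def set_concat set_map using a(1) by blast
qed

lemma set_vY: "k \<in> set ks \<Longrightarrow> ylet W k (q k) (yd W q k) \<in> set (vY W q ks)"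
  by (auto simp: vY_def)

lemma dX_leW: "W \<ge> 1 \<Longrightarrow> dX W a b \<le> W" by (simp add: dX_def Suc_le_eq)

lemma yd_le: "W \<ge> 1 \<Longrightarrow> yd W q k \<le> W" and xd_le: "W \<ge> 1 \<Longrightarrow> xd W q k \<le> W"
  by (auto simp: yd_def xd_def dX_leW)

lemma letters_uX: "a \<in> set (uX W q ks) \<Longrightarrow> a mod 3 = 1"
  by (auto simp: uX_def xwin_def)

lemma letters_vY: "a \<in> set (vY W q ks) \<Longrightarrow> a mod 3 = 2"
  by (auto simp: vY_def ylet_def)

definition ev :: "nat \<Rightarrow> (nat \<Rightarrow> nat) \<Rightarrow> nat \<Rightarrow> nat" where "ev W q k = (q k + W - q (k - 1)) mod W"

lemma hl_plain: "j \<noteq> c \<Longrightarrow> W \<ge> 1 \<Longrightarrow> hl (hdb W) (xl W p 0) = []"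
  by (simp add: hdb_xl)

lemma hw_xwin: "W \<ge> 1 \<Longrightarrow> d \<le> W \<Longrightarrow> hw (hdb W) (xwin W k c d) = (if d = 0 then [] else [d - 1])"
proof -
  assume W: "W \<ge> 1" and d: "d \<le> W"
  have "hw (hdb W) (map (\<lambda>j. xl W (k * Suc W + j) 0) xs) = []" for xs
    by (induction xs) (auto simp: hdb_xl)
  then show ?thesis using d by (simp add: xwin_def hdb_xl)
qed

lemma hw_uX: "W \<ge> 1 \<Longrightarrow> hw (hdb W) (uX W q ks) = concat (map (\<lambda>k. if odd k then [ev W q k] else []) ks)"
proof (induction ks)
  case Nil then show ?case by (simp add: uX_def)
next
  case (Cons k ks)
  have "hw (hdb W) (xwin W k (q k) (xd W q k)) = (if odd k then [ev W q k] else [])"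
    using Cons.prems by (simp add: hw_xwin xd_le) (simp add: xd_def dX_def ev_def)
  then show ?case using Cons by (simp add: uX_def)
qed

lemma hw_vY: "W \<ge> 1 \<Longrightarrow> hw (hdb W) (vY W q ks) = concat (map (\<lambda>k. if even k \<and> k \<ge> 2 then [ev W q k] else []) ks)"
proof (induction ks)
  case Nil then show ?case by (simp add: vY_def)
next
  case (Cons k ks)
  have "hl (hdb W) (ylet W k (q k) (yd W q k)) = (if even k \<and> k \<ge> 2 then [ev W q k] else [])"
    using Cons.prems by (simp add: ylet_def hdb_yl yd_le) (simp add: yd_def dX_def ev_def)
  then show ?case using Cons by (simp add: vY_def)
qed

lemma sum_list_concat_map: "sum_list (concat (map g xs)) = sum_list (map (\<lambda>x. sum_list (g x)) xs)"
  for g :: "'a \<Rightarrow> nat list"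
  by (induction xs) auto

lemma sum_concat_ifs: "sum_list (concat (map (\<lambda>k. if P k then [f k] else []) ks)) = sum_list (map (\<lambda>k. if P k then f k else 0) ks)"
  by (induction ks) auto

lemma length_concat_ifs: "length (concat (map (\<lambda>k. if P k then [f k] else []) ks)) = sum_list (map (\<lambda>k. if P k then 1 else 0) ks)"
  by (induction ks) auto

lemma sum_list_add_map: "sum_list (map f ks) + sum_list (map g ks) = sum_list (map (\<lambda>k. f k + g k) ks)"
  for f g :: "'a \<Rightarrow> nat"
  by (induction ks) (simp_all add: algebra_simps)

lemma mod_step: "(a::nat) < W \<Longrightarrow> b < W \<Longrightarrow> ((a + b) mod W + W - a) mod W = b"
proof (cases "a + b < W")
  case True
  assume "a < W" "b < W"
  then show ?thesis using True by simp
next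
  case False
  assume ab: "a < W" "b < W"
  then have "(a + b) mod W = a + b - W" using False by (simp add: le_mod_geq)
  then show ?thesis using ab False by simp
qed

lemma tele:
  assumes "W \<ge> 1" "\<forall>k\<le>n. q k < W"
  shows "sum_list (map (ev W q) [Suc 0..<Suc n]) mod W = (q n + W - q 0) mod W"
  using assms(2)
proof (induction n)
  case 0 then show ?case by simp
next
  case (Suc n)
  have IH: "sum_list (map (ev W q) [Suc 0..<Suc n]) mod W = (q n + W - q 0) mod W" using Suc by simp
  have qn: "q n < W" "q (Suc n) < W" "q 0 < W" using Suc.prems by auto
  have "sum_list (map (ev W q) [Suc 0..<Suc (Suc n)]) mod W = (sum_list (map (ev W q) [Suc 0..<Suc n]) + ev W q (Suc n)) mod W"
    by simp
  also have "\<dots> = ((q n + W - q 0) mod W + ev W q (Suc n)) mod W" using IH by (metis mod_add_left_eq)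
  also have "\<dots> = ((q n + W - q 0) + (q (Suc n) + W - q n)) mod W" unfolding ev_def by (simp add: mod_add_eq)
  also have "(q n + W - q 0) + (q (Suc n) + W - q n) = (q (Suc n) + W - q 0) + W" using qn by simp
  also have "((q (Suc n) + W - q 0) + W) mod W = (q (Suc n) + W - q 0) mod W" by simp
  finally show ?case .
qed

lemma D_sub:
  assumes W: "W \<ge> 1" and z: "z \<in> SXY W m" and d: "decl (posb W) 0 z"
  shows "hw (hdb W) z \<in> Mset W (2*m) 0"
proof -
  obtain u v where uv: "u \<in> lang (Xre W m)" "v \<in> lang (Yre W m)" "z \<in> shuffles u v" using z by (auto simp: SXY_def)
  obtain qx where qx: "u = uX W qx [0..<Suc (2*m)]" "\<forall>k<2*m. qx k < W" "qx (2*m) = 0" using uv(1) by (auto simp: lang_Xre)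
  obtain qy where qy: "v = vY W qy [0..<Suc (2*m)]" "qy 0 = 0" "\<forall>k. 1 \<le> k \<and> k \<le> 2*m \<longrightarrow> qy k < W"
    using uv(2) by (auto simp: lang_Yre)
  have qyW: "qy k < W" if "k \<le> 2*m" for k using qy W that by (cases "k = 0") auto
  have eq: "qx k = qy k" if k: "k \<le> 2*m" for k
  proof (rule ccontr)
    assume ne: "qx k \<noteq> qy k"
    have "xl W (k * Suc W + qy k) 0 \<in> set (uX W qx [0..<Suc (2*m)])" by (rule set_uX) (use k ne qyW[OF k] in auto)
    then have "xl W (k * Suc W + qy k) 0 \<in> set u" using qx(1) by simp
    then have A: "k * Suc W + qy k \<in> posb W ` set u" by force
    have "ylet W k (qy k) (yd W qy k) \<in> set (vY W qy [0..<Suc (2*m)])" by (rule set_vY) (use k in auto)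
    then have B1: "ylet W k (qy k) (yd W qy k) \<in> set v" using qy(1) by simp
    have B2: "posb W (ylet W k (qy k) (yd W qy k)) = k * Suc W + qy k"
      unfolding ylet_def by (rule posb_yl[OF yd_le[OF W]])
    have "k * Suc W + qy k \<in> posb W ` set v" using B1 B2 by (metis image_eqI)
    with A show False using shuffles_decl_disjoint[OF uv(3) d] by blast
  qed
  define q where "q = qx"
  have qW: "\<forall>k\<le>2*m. q k < W" using eq qyW by (auto simp: q_def)
  have q0: "q 0 = 0" using eq[of 0] qy(2) by (simp add: q_def)
  have qK: "q (2*m) = 0" using qx(3) by (simp add: q_def)
  have v': "v = vY W q [0..<Suc (2*m)]" unfolding qy(1) by (rule vY_cong) (auto simp: q_def eq)
  have u': "u = uX W q [0..<Suc (2*m)]" using qx(1) by (simp add: q_def)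
  let ?g = "hl (hdb W)"
  have hz: "hw (hdb W) z = concat (map ?g z)" by (simp add: hw_def)
  have lenz: "length (hw (hdb W) z) = length (hw (hdb W) u) + length (hw (hdb W) v)"
    using shuffles_sum[OF uv(3), of "\<lambda>a. length (?g a)"] by (simp add: hw_def length_concat comp_def)
  have sumz: "sum_list (hw (hdb W) z) = sum_list (hw (hdb W) u) + sum_list (hw (hdb W) v)"
    using shuffles_sum[OF uv(3), of "\<lambda>a. sum_list (?g a)"] by (simp add: hw_def sum_list_concat_map comp_def)
  have pk: "(\<lambda>k. (if odd k then 1 else 0) + (if even k \<and> 2 \<le> k then 1 else 0)) = (\<lambda>k::nat. if k \<ge> 1 then 1 else (0::nat))"
    by (rule ext) (auto elim: oddE)
  have pk2: "(\<lambda>k. (if odd k then ev W q k else 0) + (if even k \<and> 2 \<le> k then ev W q k else 0)) = (\<lambda>k. if k \<ge> 1 then ev W q k else 0)"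
    by (rule ext) (auto elim: oddE)
  have up: "[0..<Suc (2*m)] = 0 # [Suc 0..<Suc (2*m)]" by (simp add: upt_conv_Cons)
  have s1: "sum_list (map (\<lambda>k. if k \<ge> 1 then f k else 0) [Suc 0..<Suc n]) = sum_list (map f [Suc 0..<Suc n])" for f :: "nat \<Rightarrow> nat" and n
    by (intro arg_cong[where f = sum_list] map_cong) auto
  have "length (hw (hdb W) z) = sum_list (map (\<lambda>k::nat. if k \<ge> 1 then 1 else 0) [0..<Suc (2*m)])"
    unfolding lenz u' v' hw_uX[OF W] hw_vY[OF W] length_concat_ifs sum_list_add_map pk by simp
  also have "\<dots> = 2*m" unfolding up using s1[of "\<lambda>_. 1" "2*m"] by (simp add: sum_list_triv)
  finally have L: "length (hw (hdb W) z) = 2*m" .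
  have "sum_list (hw (hdb W) z) = sum_list (map (\<lambda>k. if k \<ge> 1 then ev W q k else 0) [0..<Suc (2*m)])"
    unfolding sumz u' v' hw_uX[OF W] hw_vY[OF W] sum_concat_ifs sum_list_add_map pk2 by simp
  also have "\<dots> = sum_list (map (\<lambda>k. if k \<ge> 1 then ev W q k else 0) [Suc 0..<Suc (2*m)])"
    by (subst up) (simp del: upt_Suc)
  also have "\<dots> = sum_list (map (ev W q) [Suc 0..<Suc (2*m)])" by (rule s1)
  finally have "sum_list (hw (hdb W) z) mod W = (q (2*m) + W - q 0) mod W" using tele[OF W qW] by simp
  then have S: "sum_list (hw (hdb W) z) mod W = 0" using q0 qK by simp
  have B: "\<forall>x\<in>set (hw (hdb W) z). x < W" using hl_hdb_bound by (auto simp: hw_def)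
  show ?thesis using L S B by (simp add: Mset_def)
qed

definition zwin :: "nat \<Rightarrow> (nat \<Rightarrow> nat) \<Rightarrow> nat \<Rightarrow> nat list" where
  "zwin W q k = map (\<lambda>j. if j = q k then ylet W k (q k) (yd W q k) else xl W (k * Suc W + j) 0) [0..<W]
     @ [xl W (k * Suc W + W) (xd W q k)]"

definition zz :: "nat \<Rightarrow> (nat \<Rightarrow> nat) \<Rightarrow> nat list \<Rightarrow> nat list" where
  "zz W q ks = concat (map (zwin W q) ks)"

lemma sh1: "distinct xs \<Longrightarrow> c \<in> set xs \<Longrightarrow>
  map (\<lambda>j. if j = c then y else f j) xs \<in> shuffles (map f (filter (\<lambda>j. j \<noteq> c) xs)) [y]"
proof (induction xs)
  case Nil then show ?case by simp
next
  case (Cons x xs)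
  show ?case
  proof (cases "x = c")
    case True
    then have "c \<notin> set xs" using Cons.prems by auto
    then have "map (\<lambda>j. if j = c then y else f j) xs = map f xs" "filter (\<lambda>j. j \<noteq> c) xs = xs"
      by (auto intro!: map_cong filter_True)
    then show ?thesis using True by (auto intro: Cons_in_shuffles_rightI)
  next
    case False
    then have "c \<in> set xs" "distinct xs" using Cons.prems by auto
    then show ?thesis using Cons.IH False by (auto intro: Cons_in_shuffles_leftI)
  qed
qed

lemma zwin_sh: "q k < W \<Longrightarrow> zwin W q k \<in> shuffles (xwin W k (q k) (xd W q k)) [ylet W k (q k) (yd W q k)]"
proof -
  assume c: "q k < W"
  have "map (\<lambda>j. if j = q k then ylet W k (q k) (yd W q k) else xl W (k * Suc W + j) 0) [0..<W]
    \<in> shuffles (map (\<lambda>j. xl W (k * Suc W + j) 0) (filter (\<lambda>j. j \<noteq> q k) [0..<W])) [ylet W k (q k) (yd W q k)]"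
    using c by (intro sh1) auto
  moreover have "[xl W (k * Suc W + W) (xd W q k)] \<in> shuffles [xl W (k * Suc W + W) (xd W q k)] []" by simp
  ultimately show ?thesis unfolding zwin_def xwin_def using shuffles_append by fastforce
qed

lemma zz_sh: "\<forall>k\<in>set ks. q k < W \<Longrightarrow> zz W q ks \<in> shuffles (uX W q ks) (vY W q ks)"
proof (induction ks)
  case Nil then show ?case by (simp add: zz_def uX_def vY_def)
next
  case (Cons k ks)
  have "zwin W q k @ zz W q ks \<in> shuffles (xwin W k (q k) (xd W q k) @ uX W q ks) ([ylet W k (q k) (yd W q k)] @ vY W q ks)"
    using Cons by (intro shuffles_append zwin_sh) auto
  then show ?case by (simp add: zz_def uX_def vY_def)
qed

lemma length_zwin[simp]: "length (zwin W q k) = Suc W" by (simp add: zwin_def)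

lemma zwin_decl: "W \<ge> 1 \<Longrightarrow> decl (posb W) (k * Suc W) (zwin W q k)"
  unfolding decl_def
proof (intro allI impI)
  fix i assume W: "W \<ge> 1" and i: "i < length (zwin W q k)"
  show "posb W (zwin W q k ! i) = k * Suc W + i"
  proof (cases "i < W")
    case True
    then show ?thesis using yd_le[OF W] by (auto simp: zwin_def nth_append ylet_def)
  next
    case False
    then have "i = W" using i by simp
    then show ?thesis using xd_le[OF W] by (simp add: zwin_def nth_append)
  qed
qed

lemma zz_decl: "W \<ge> 1 \<Longrightarrow> decl (posb W) 0 (zz W q [0..<n])"
proof (induction n)
  case 0 then show ?case by (simp add: zz_def)
next
  case (Suc n)
  have l: "length (zz W q [0..<n]) = n * Suc W" by (induction n) (auto simp: zz_def)
  have "zz W q [0..<Suc n] = zz W q [0..<n] @ zwin W q n" by (simp add: zz_def)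
  then show ?case using Suc zwin_decl[OF Suc.prems, of n q] l by (simp add: decl_append)
qed

lemma concat_single_c: "distinct xs \<Longrightarrow> c \<in> set xs \<Longrightarrow> concat (map (\<lambda>j. if j = c then Gs else []) xs) = Gs"
proof (induction xs)
  case Nil then show ?case by simp
next
  case (Cons x xs)
  show ?case
  proof (cases "x = c")
    case True
    then have "c \<notin> set xs" using Cons.prems by auto
    then have "concat (map (\<lambda>j. if j = c then Gs else []) xs) = []" by (induction xs) auto
    then show ?thesis using True by simp
  next
    case False then show ?thesis using Cons by auto
  qed
qed

lemma hw_zwin: "W \<ge> 1 \<Longrightarrow> q k < W \<Longrightarrow> hw (hdb W) (zwin W q k) = (if k \<ge> 1 then [ev W q k] else [])"
proof -
  assume W: "W \<ge> 1" and c: "q k < W"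
  have "hw (hdb W) (map (\<lambda>j. if j = q k then ylet W k (q k) (yd W q k) else xl W (k * Suc W + j) 0) [0..<W])
    = concat (map (\<lambda>j. if j = q k then hl (hdb W) (ylet W k (q k) (yd W q k)) else []) [0..<W])"
    unfolding hw_def by (simp add: comp_def if_distrib hdb_xl cong: if_cong)
  also have "\<dots> = hl (hdb W) (ylet W k (q k) (yd W q k))" using c by (intro concat_single_c) auto
  also have "\<dots> = (if even k \<and> k \<ge> 2 then [ev W q k] else [])"
    using W by (simp add: ylet_def hdb_yl yd_le) (simp add: yd_def dX_def ev_def)
  finally have A: "hw (hdb W) (map (\<lambda>j. if j = q k then ylet W k (q k) (yd W q k) else xl W (k * Suc W + j) 0) [0..<W])
    = (if even k \<and> k \<ge> 2 then [ev W q k] else [])" .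
  have B: "hl (hdb W) (xl W (k * Suc W + W) (xd W q k)) = (if odd k then [ev W q k] else [])"
    using W by (simp add: hdb_xl xd_le) (simp add: xd_def dX_def ev_def)
  show ?thesis unfolding zwin_def hw_simps A B by (auto elim: oddE)
qed

lemma hw_zz: "W \<ge> 1 \<Longrightarrow> \<forall>k\<le>n. q k < W \<Longrightarrow> hw (hdb W) (zz W q [0..<Suc n]) = map (ev W q) [Suc 0..<Suc n]"
proof (induction n)
  case 0 then show ?case by (simp add: zz_def hw_zwin)
next
  case (Suc n)
  have "zz W q [0..<Suc (Suc n)] = zz W q [0..<Suc n] @ zwin W q (Suc n)" by (simp add: zz_def)
  then show ?case using Suc by (simp add: hw_zwin)
qed

lemma D_sup:
  assumes W: "W \<ge> 1" and js: "js \<in> Mset W (2*m) 0"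
  shows "\<exists>z\<in>SXY W m. decl (posb W) 0 z \<and> hw (hdb W) z = js"
proof -
  have jl: "length js = 2*m" "\<forall>x\<in>set js. x < W" "sum_list js mod W = 0" using js by (auto simp: Mset_def)
  define q where "q k = sum_list (take k js) mod W" for k
  have qW: "q k < W" for k using W by (simp add: q_def)
  have q0: "q 0 = 0" by (simp add: q_def)
  have qK: "q (2*m) = 0" using jl by (simp add: q_def)
  have evq: "ev W q (Suc i) = js ! i" if i: "i < 2*m" for i
  proof -
    have "take (Suc i) js = take i js @ [js ! i]" using i jl(1) by (simp add: take_Suc_conv_app_nth)
    then have "q (Suc i) = (q i + js ! i) mod W" by (simp add: q_def mod_add_left_eq)
    moreover have "js ! i < W" using jl i by auto
    ultimately show ?thesis using mod_step[OF qW[of i]] by (simp add: ev_def)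
  qed
  have "map (ev W q) [Suc 0..<Suc (2*m)] = js"
    by (rule nth_equalityI) (use jl evq in \<open>auto simp del: upt_Suc\<close>)
  define z where "z = zz W q [0..<Suc (2*m)]"
  have hz: "hw (hdb W) z = js" using hw_zz[OF W] qW \<open>map (ev W q) _ = js\<close> by (simp add: z_def)
  have dz: "decl (posb W) 0 z" unfolding z_def by (rule zz_decl[OF W])
  have "uX W q [0..<Suc (2*m)] \<in> lang (Xre W m)" using qW qK by (auto simp: lang_Xre)
  moreover have "vY W q [0..<Suc (2*m)] \<in> lang (Yre W m)" using qW q0 by (auto simp: lang_Yre)
  moreover have "z \<in> shuffles (uX W q [0..<Suc (2*m)]) (vY W q [0..<Suc (2*m)])" unfolding z_def
    using qW by (intro zz_sh) auto
  ultimately have "z \<in> SXY W m" by (auto simp: SXY_def)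
  then show ?thesis using hz dz by blast
qed

lemma okw_restr: "okw restr w \<longleftrightarrow> (\<forall>a\<in>set w. a mod 3 \<noteq> 0)"
  by (auto simp: okw_def restr_def)

lemma hw_restr: "\<forall>a\<in>set w. a mod 3 \<noteq> 0 \<Longrightarrow> hw restr w = w"
  by (induction w) (auto simp: restr_def hl_def)

lemma cl_mod3: "cl j mod 3 = 0" by (simp add: cl_def)

lemma LA_has0: "l \<ge> 1 \<Longrightarrow> w \<in> lang (LA W l N) \<Longrightarrow> \<exists>a\<in>set w. a mod 3 = 0"
proof -
  assume l: "l \<ge> 1" and w: "w \<in> lang (LA W l N)"
  then obtain js p where "w = concat (map blk js) @ p" "length js = l"
    by (auto simp: LA_def conc_def lang_pw_blockre)
  moreover obtain j js' where "js = j # js'" using l \<open>length js = l\<close> by (cases js) auto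
  ultimately have "cl j \<in> set w" by (auto simp: blk_def)
  with cl_mod3 show ?thesis by (rule bexI)
qed

lemma LB2_has0: "N \<ge> 1 \<Longrightarrow> w \<in> lang (LB2 W N) \<Longrightarrow> \<exists>a\<in>set w. a mod 3 = 0"
proof -
  assume N: "N \<ge> 1" and w: "w \<in> lang (LB2 W N)"
  then have "length w = N" "set w \<subseteq> insert 0 (cl ` {..<W})" by (auto simp: lang_LB2)
  then obtain a where "a \<in> set w" using N by (cases w) auto
  then have "a = 0 \<or> a \<in> cl ` {..<W}" using \<open>set w \<subseteq> _\<close> by auto
  then have "a mod 3 = 0" using cl_mod3 by auto
  from this \<open>a \<in> set w\<close> show ?thesis by (rule bexI)
qed

lemma Xre_letters: "W \<ge> 1 \<Longrightarrow> w \<in> lang (Xre W m) \<Longrightarrow> (\<forall>a\<in>set w. a mod 3 = 1) \<and> w \<noteq> []"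
proof -
  assume W: "W \<ge> 1" and w: "w \<in> lang (Xre W m)"
  then obtain q where q: "w = uX W q [0..<Suc (2*m)]" "\<forall>k<2*m. q k < W" "q (2*m) = 0" by (auto simp: lang_Xre)
  have "\<forall>k\<in>set [0..<Suc (2*m)]. q k < W" using q W by (auto simp: less_Suc_eq)
  then have "length w = Suc (2*m) * W" using q length_uX by simp
  then show ?thesis using W q letters_uX by auto
qed

lemma Yre_letters: "w \<in> lang (Yre W m) \<Longrightarrow> (\<forall>a\<in>set w. a mod 3 = 2) \<and> w \<noteq> []"
proof -
  assume w: "w \<in> lang (Yre W m)"
  then obtain q where q: "w = vY W q [0..<Suc (2*m)]" by (auto simp: lang_Yre)
  then have "length w = Suc (2*m)" by (simp add: length_vY)
  then show ?thesis using q letters_vY by auto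
qed

lemma restr_shuffle:
  assumes W: "W \<ge> 1" and l: "l \<ge> 1" and N: "N \<ge> 1"
  shows "{w \<in> shuffle_lang (lang (LA W l N) \<union> lang (Xre W m)) (lang (LB2 W N) \<union> lang (Yre W m)). okw restr w}
    = SXY W m"
proof
  show "{w \<in> shuffle_lang (lang (LA W l N) \<union> lang (Xre W m)) (lang (LB2 W N) \<union> lang (Yre W m)). okw restr w} \<subseteq> SXY W m"
  proof
    fix w assume "w \<in> {w \<in> shuffle_lang (lang (LA W l N) \<union> lang (Xre W m)) (lang (LB2 W N) \<union> lang (Yre W m)). okw restr w}"
    then obtain u v where uv: "u \<in> lang (LA W l N) \<union> lang (Xre W m)" "v \<in> lang (LB2 W N) \<union> lang (Yre W m)"
      "w \<in> shuffles u v" and ok: "\<forall>a\<in>set w. a mod 3 \<noteq> 0"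
      by (auto simp: shuffle_lang_def okw_restr)
    have sw: "set w = set u \<union> set v" using set_shuffles[OF uv(3)] .
    have "u \<notin> lang (LA W l N)"
    proof
      assume "u \<in> lang (LA W l N)"
      from LA_has0[OF l this] obtain a where a: "a \<in> set u" "a mod 3 = 0" ..
      have "a \<in> set w" using a(1) sw by blast
      then have "a mod 3 \<noteq> 0" by (rule bspec[OF ok])
      then show False using a(2) by simp
    qed
    moreover have "v \<notin> lang (LB2 W N)"
    proof
      assume "v \<in> lang (LB2 W N)"
      from LB2_has0[OF N this] obtain a where a: "a \<in> set v" "a mod 3 = 0" ..
      have "a \<in> set w" using a(1) sw by blast
      then have "a mod 3 \<noteq> 0" by (rule bspec[OF ok])
      then show False using a(2) by simp
    qed
    ultimately show "w \<in> SXY W m" using uv by (auto simp: SXY_def)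
  qed
  show "SXY W m \<subseteq> {w \<in> shuffle_lang (lang (LA W l N) \<union> lang (Xre W m)) (lang (LB2 W N) \<union> lang (Yre W m)). okw restr w}"
  proof
    fix w assume "w \<in> SXY W m"
    then obtain u v where uv: "u \<in> lang (Xre W m)" "v \<in> lang (Yre W m)" "w \<in> shuffles u v" by (auto simp: SXY_def)
    have "\<forall>a\<in>set w. a mod 3 \<noteq> 0" using set_shuffles[OF uv(3)] Xre_letters[OF W uv(1)] Yre_letters[OF uv(2)] by auto
    then show "w \<in> {w \<in> shuffle_lang (lang (LA W l N) \<union> lang (Xre W m)) (lang (LB2 W N) \<union> lang (Yre W m)). okw restr w}"
      using uv by (auto simp: shuffle_lang_def okw_restr)
  qed
qed

theorem shuffle_LB:
  assumes W: "W \<ge> 1" and l: "l \<ge> 1" and N: "N \<ge> 1" and m: "m \<ge> 1"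
    and r: "lang r = shuffle_lang (lang (LA W l N) \<union> lang (Xre W m)) (lang (LB2 W N) \<union> lang (Yre W m))"
  shows "W ^ lg (2*m) \<le> rpn_len r"
proof -
  define r1 where "r1 = hom restr r"
  have L1: "lang r1 = SXY W m"
  proof -
    have "lang r1 = hw restr ` {w \<in> lang r. okw restr w}" by (simp add: r1_def lang_hom)
    also have "\<dots> = {w \<in> lang r. okw restr w}" using hw_restr okw_restr by (auto simp: image_iff)
    also have "\<dots> = SXY W m" using restr_shuffle[OF W l N] r by simp
    finally show ?thesis .
  qed
  define Nb where "Nb = Suc (2*m) * Suc W"
  define r2 where "r2 = T (posb W) 0 Nb r1"
  have L2: "lang r2 = {z \<in> SXY W m. decl (posb W) 0 z}"
  proof
    show "lang r2 \<subseteq> {z \<in> SXY W m. decl (posb W) 0 z}"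
    proof
      fix z assume "z \<in> lang r2"
      then have "z \<in> lang r1 \<and> decl (posb W) 0 z \<and> Nb = 0 + length z" unfolding r2_def by (rule T_sound)
      then show "z \<in> {z \<in> SXY W m. decl (posb W) 0 z}" using L1 by simp
    qed
    show "{z \<in> SXY W m. decl (posb W) 0 z} \<subseteq> lang r2"
    proof
      fix z assume z: "z \<in> {z \<in> SXY W m. decl (posb W) 0 z}"
      have len: "length z = Nb" using SXY_length[OF W] z by (simp add: Nb_def)
      have "\<forall>x\<in>lang r1. length x = length z" using L1 SXY_length[OF W] len by (simp add: Nb_def)
      then have "z \<in> lang (T (posb W) 0 (0 + length z) r1)" by (rule T_complete) (use z L1 in auto)
      then show "z \<in> lang r2" using len by (simp add: r2_def)
    qed
  qed
  define r3 where "r3 = hom (hdb W) r2"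
  have L3: "lang r3 = Mset W (2*m) 0"
  proof -
    have "lang r3 = hw (hdb W) ` {z \<in> SXY W m. decl (posb W) 0 z}" by (simp add: r3_def lang_hom L2)
    also have "\<dots> = Mset W (2*m) 0"
    proof
      show "hw (hdb W) ` {z \<in> SXY W m. decl (posb W) 0 z} \<subseteq> Mset W (2*m) 0" using D_sub[OF W] by auto
      show "Mset W (2*m) 0 \<subseteq> hw (hdb W) ` {z \<in> SXY W m. decl (posb W) 0 z}"
      proof
        fix js assume "js \<in> Mset W (2*m) 0"
        then obtain z where "z \<in> SXY W m" "decl (posb W) 0 z" "hw (hdb W) z = js" using D_sup[OF W] by blast
        then show "js \<in> hw (hdb W) ` {z \<in> SXY W m. decl (posb W) 0 z}" by blast
      qed
    qed
    finally show ?thesis .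
  qed
  have "W ^ lg (2*m) \<le> rpn_len r3" using LB_eq[OF W _ _ L3] m W by simp
  also have "rpn_len r3 = rpn_len r2" by (simp add: r3_def)
  also have "\<dots> \<le> rpn_len r1" unfolding r2_def by (rule rpn_len_T)
  also have "rpn_len r1 = rpn_len r" by (simp add: r1_def)
  finally show ?thesis .
qed

lemma inter_lang:
  assumes W: "W \<ge> 1" and l: "l \<ge> 1" and N: "N \<ge> 1"
  shows "(lang (LA W l N) \<union> lang (Xre W m)) \<inter> (lang (LB2 W N) \<union> lang (Yre W m)) = Sl W l N"
proof -
  have a: "lang (LA W l N) \<inter> lang (Yre W m) = {}"
  proof (rule ccontr)
    assume "lang (LA W l N) \<inter> lang (Yre W m) \<noteq> {}"
    then obtain w where w: "w \<in> lang (LA W l N)" "w \<in> lang (Yre W m)" by blast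
    from LA_has0[OF l w(1)] obtain a where a: "a \<in> set w" "a mod 3 = 0" ..
    have "\<forall>a\<in>set w. a mod 3 = 2" using Yre_letters[OF w(2)] by (rule conjunct1)
    then have "a mod 3 = 2" using a(1) by (rule bspec)
    then show False using a(2) by simp
  qed
  have b: "lang (Xre W m) \<inter> lang (LB2 W N) = {}"
  proof (rule ccontr)
    assume "lang (Xre W m) \<inter> lang (LB2 W N) \<noteq> {}"
    then obtain w where w: "w \<in> lang (Xre W m)" "w \<in> lang (LB2 W N)" by blast
    from LB2_has0[OF N w(2)] obtain a where a: "a \<in> set w" "a mod 3 = 0" ..
    have "\<forall>a\<in>set w. a mod 3 = 1" using Xre_letters[OF W w(1)] by (rule conjunct1)
    then have "a mod 3 = 1" using a(1) by (rule bspec)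
    then show False using a(2) by simp
  qed
  have c: "lang (Xre W m) \<inter> lang (Yre W m) = {}"
  proof (rule ccontr)
    assume "lang (Xre W m) \<inter> lang (Yre W m) \<noteq> {}"
    then obtain w where w: "w \<in> lang (Xre W m)" "w \<in> lang (Yre W m)" by blast
    have A: "(\<forall>a\<in>set w. a mod 3 = 1) \<and> w \<noteq> []" by (rule Xre_letters[OF W w(1)])
    have B: "(\<forall>a\<in>set w. a mod 3 = 2) \<and> w \<noteq> []" by (rule Yre_letters[OF w(2)])
    obtain a where "a \<in> set w" using A by (cases w) auto
    then have "a mod 3 = 1" "a mod 3 = 2" using conjunct1[OF A] conjunct1[OF B] by (auto dest: bspec)
    then show False by simp
  qed
  show ?thesis using a b c lang_LA_LB2[OF W] by blast
qed

section \<open>Size bounds\<close>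

lemma sumre_le: "\<forall>r\<in>set rs. rpn_len r \<le> B \<Longrightarrow> rpn_len (sumre rs) \<le> length rs * (B + 1) + 1"
  by (induction rs) auto

lemma prodre_le: "\<forall>r\<in>set rs. rpn_len r \<le> B \<Longrightarrow> rpn_len (prodre rs) \<le> length rs * (B + 1) + 1"
  by (induction rs) auto

lemma Xblock_le: "rpn_len (Xblock W i) \<le> W * (2 * W * W + 4 * W + 4) + 1"
proof -
  have inner: "rpn_len (sumre (map (\<lambda>b. wre (xwin W (2*i+1) b (dX W a b))) [0..<W])) \<le> W * (2 * W + 2) + 1" for a
  proof -
    have "\<forall>r\<in>set (map (\<lambda>b. wre (xwin W (2*i+1) b (dX W a b))) [0..<W]). rpn_len r \<le> 2 * W + 1"
      by (auto simp: length_xwin)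
    from sumre_le[OF this] show ?thesis by simp
  qed
  have "\<forall>r\<in>set (map (\<lambda>a. Times (wre (xwin W (2*i) a 0))
       (sumre (map (\<lambda>b. wre (xwin W (2*i+1) b (dX W a b))) [0..<W]))) [0..<W]).
       rpn_len r \<le> (2 * W + 1) + (W * (2 * W + 2) + 1) + 1"
    using inner by (auto simp: length_xwin intro: add_mono)
  from sumre_le[OF this] show ?thesis by (simp add: Xblock_def algebra_simps)
qed

lemma Yblock_le: "rpn_len (Yblock W i) \<le> W * (2 * W + 4) + 1"
proof -
  have inner: "rpn_len (sumre (map (\<lambda>b. Atom (ylet W (2*i+2) b (dX W a b))) [0..<W])) \<le> W * 2 + 1" for a
  proof -
    have "\<forall>r\<in>set (map (\<lambda>b. Atom (ylet W (2*i+2) b (dX W a b))) [0..<W]). rpn_len r \<le> 1" by auto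
    from sumre_le[OF this] show ?thesis by simp
  qed
  have "\<forall>r\<in>set (map (\<lambda>a. Times (Atom (ylet W (2*i+1) a 0))
       (sumre (map (\<lambda>b. Atom (ylet W (2*i+2) b (dX W a b))) [0..<W]))) [0..<W]).
       rpn_len r \<le> 1 + (W * 2 + 1) + 1"
    using inner by auto
  from sumre_le[OF this] show ?thesis by (simp add: Yblock_def algebra_simps)
qed

lemma pows: "(W::nat) \<ge> 1 \<Longrightarrow> W \<le> W ^ 4 \<and> W * W \<le> W ^ 4 \<and> W * W * W \<le> W ^ 4 \<and> 1 \<le> W ^ 4"
proof -
  assume W: "W \<ge> 1"
  have a: "W ^ 1 \<le> W ^ 4" "W ^ 2 \<le> W ^ 4" "W ^ 3 \<le> W ^ 4" "W ^ 0 \<le> W ^ 4"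
    by (rule power_increasing; use W in simp)+
  then show ?thesis by (simp add: power2_eq_square power3_eq_cube)
qed

lemma Xre_le: "W \<ge> 1 \<Longrightarrow> m \<le> W \<Longrightarrow> rpn_len (Xre W m) \<le> 17 * W ^ 4"
proof -
  assume W: "W \<ge> 1" and m: "m \<le> W"
  have "\<forall>r\<in>set (map (Xblock W) [0..<m]). rpn_len r \<le> W * (2 * W * W + 4 * W + 4) + 1" using Xblock_le by auto
  from prodre_le[OF this] have P: "rpn_len (prodre (map (Xblock W) [0..<m])) \<le> m * (W * (2 * W * W + 4 * W + 4) + 1 + 1) + 1"
    by simp
  have M: "m * (W * (2 * W * W + 4 * W + 4) + 1 + 1) \<le> W * (W * (2 * W * W + 4 * W + 4) + 1 + 1)" using m by (rule mult_le_mono1)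
  have e1: "W * (W * (2 * W * W + 4 * W + 4) + 1 + 1) = 2 * W ^ 4 + 4 * (W * W * W) + 4 * (W * W) + 2 * W"
    by (simp add: algebra_simps power4_eq_xxxx)
  have e2: "rpn_len (Xre W m) = rpn_len (prodre (map (Xblock W) [0..<m])) + 2 * W + 2"
    using W by (simp add: Xre_def length_xwin)
  have p: "W \<le> W ^ 4" "W * W \<le> W ^ 4" "W * W * W \<le> W ^ 4" "1 \<le> W ^ 4" using pows[OF W] by auto
  show ?thesis using P M e1 e2 p by linarith
qed

lemma Yre_le: "W \<ge> 1 \<Longrightarrow> m \<le> W \<Longrightarrow> rpn_len (Yre W m) \<le> 11 * W ^ 4"
proof -
  assume W: "W \<ge> 1" and m: "m \<le> W"
  have "\<forall>r\<in>set (map (Yblock W) [0..<m]). rpn_len r \<le> W * (2 * W + 4) + 1" using Yblock_le by auto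
  from prodre_le[OF this] have P: "rpn_len (prodre (map (Yblock W) [0..<m])) \<le> m * (W * (2 * W + 4) + 1 + 1) + 1"
    by simp
  have M: "m * (W * (2 * W + 4) + 1 + 1) \<le> W * (W * (2 * W + 4) + 1 + 1)" using m by (rule mult_le_mono1)
  have e1: "W * (W * (2 * W + 4) + 1 + 1) = 2 * (W * W * W) + 4 * (W * W) + 2 * W"
    by (simp add: algebra_simps)
  have e2: "rpn_len (Yre W m) = rpn_len (prodre (map (Yblock W) [0..<m])) + 2"
    by (simp add: Yre_def)
  have p: "W \<le> W ^ 4" "W * W \<le> W ^ 4" "W * W * W \<le> W ^ 4" "1 \<le> W ^ 4" using pows[OF W] by auto
  show ?thesis using P M e1 e2 p by linarith
qed

lemma LA_le: "W \<ge> 1 \<Longrightarrow> rpn_len (LA W W (W * W)) \<le> 15 * W ^ 4"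
proof -
  assume W: "W \<ge> 1"
  have e: "rpn_len (LA W W (W * W)) = 2 * (W * W * W) + 8 * (W * W) + 2 * W + 3"
    by (simp add: rpn_len_LA algebra_simps)
  have p: "W \<le> W ^ 4" "W * W \<le> W ^ 4" "W * W * W \<le> W ^ 4" "1 \<le> W ^ 4" using pows[OF W] by auto
  show ?thesis using e p by linarith
qed

lemma LB2_le: "W \<ge> 1 \<Longrightarrow> rpn_len (LB2 W (W * W)) \<le> 7 * W ^ 4"
proof -
  assume W: "W \<ge> 1"
  have e: "rpn_len (LB2 W (W * W)) = 2 * (W * W * W) + 4 * (W * W) + 1"
    by (simp add: rpn_len_LB2 algebra_simps)
  have p: "W \<le> W ^ 4" "W * W \<le> W ^ 4" "W * W * W \<le> W ^ 4" "1 \<le> W ^ 4" using pows[OF W] by auto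
  show ?thesis using e p by linarith
qed

lemma Lc_le: "W \<ge> 1 \<Longrightarrow> rpn_len (Lc W W) \<le> 12 * W ^ 4"
proof -
  assume W: "W \<ge> 1"
  have e: "rpn_len (Lc W W) = 4 * (W * W) + 4 * W + 4"
    by (simp add: rpn_len_Lc algebra_simps)
  have p: "W \<le> W ^ 4" "W * W \<le> W ^ 4" "W * W * W \<le> W ^ 4" "1 \<le> W ^ 4" using pows[OF W] by auto
  show ?thesis using e p by linarith
qed

lemma asym:
  assumes n: "n \<ge> (256::nat)"
  shows "real n powr (1 / 64 * ln (real n)) \<le> real (2 ^ (lg n div 4 * (lg n div 4)))"
proof -
  define k where "k = lg n div 4"
  define l2 where "l2 = log 2 (real n)"
  have n1: "n \<ge> 1" using n by simp
  have npos: "real n > 0" using n by simp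
  have "n < 2 ^ Suc (lg n)" using lg_bounds[OF n1] by simp
  then have "real n < 2 ^ Suc (lg n)" by (metis of_nat_less_iff of_nat_numeral of_nat_power)
  moreover have "(2::real) powr real (Suc (lg n)) = 2 ^ Suc (lg n)" by (rule powr_realpow) simp
  ultimately have "real n < 2 powr real (Suc (lg n))" by simp
  then have L1: "l2 < real (lg n) + 1" unfolding l2_def using npos by (subst log_less_iff) (auto simp: add.commute)
  have L0: "8 \<le> l2" unfolding l2_def using le_log2_of_power[of 8 n] n by simp
  have "lg n \<le> 4 * k + 3" unfolding k_def by simp
  then have K: "real (lg n) \<le> 4 * real k + 3" by linarith
  have kb: "l2 \<le> 8 * real k" using L0 L1 K by linarith
  have ln2: "ln (2::real) > 0" "ln (2::real) \<le> 1" using ln_le_minus_one[of 2] by auto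
  have lnn: "ln (real n) = l2 * ln 2" unfolding l2_def by (simp add: log_def)
  have sq: "l2 * l2 \<le> (8 * real k) * (8 * real k)" using kb L0 by (intro mult_mono) auto
  have "1 / 64 * ln (real n) * ln (real n) = (l2 * l2) * (ln 2 * ln 2) / 64" by (simp add: lnn algebra_simps)
  also have "\<dots> \<le> ((8 * real k) * (8 * real k)) * (ln 2 * ln 2) / 64"
    using sq ln2 by (intro divide_right_mono mult_right_mono) auto
  also have "\<dots> = (real k * real k * ln 2) * ln 2" by (simp add: algebra_simps)
  also have "\<dots> \<le> (real k * real k * ln 2) * 1" using ln2 by (intro mult_left_mono) auto
  finally have key: "1 / 64 * ln (real n) * ln (real n) \<le> real (k * k) * ln 2" by simp
  have "real n powr (1 / 64 * ln (real n)) = exp (1 / 64 * ln (real n) * ln (real n))"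
    using npos by (simp add: powr_def)
  also have "\<dots> \<le> exp (real (k * k) * ln 2)" using key by simp
  also have "\<dots> = 2 powr real (k * k)" by (simp add: powr_def)
  also have "\<dots> = 2 ^ (k * k)" by (rule powr_realpow) simp
  also have "\<dots> = real (2 ^ (k * k))" by simp
  finally show ?thesis by (simp add: k_def)
qed

lemma starfree_wre: "starfree (wre xs)" by (induction xs) auto

lemma starfree_prodre: "\<forall>r\<in>set rs. starfree r \<Longrightarrow> starfree (prodre rs)" by (induction rs) auto

lemma starfree_Xre: "starfree (Xre W m)"
  unfolding Xre_def Xblock_def
  by (auto simp: starfree_wre intro!: starfree_prodre starfree_sumre)

lemma starfree_Yre: "starfree (Yre W m)"
  unfolding Yre_def Yblock_def
  by (auto intro!: starfree_prodre starfree_sumre)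

lemma params:
  assumes n: "n \<ge> (256::nat)"
  defines "k \<equiv> lg n div 4"
  shows "2 ^ k \<ge> (4::nat)" "even ((2::nat) ^ k)" "(2::nat) ^ k * 2 ^ k * (2 ^ k * 2 ^ k) \<le> n"
    "(2::nat) ^ k * 2 ^ k \<le> n" "((2::nat) ^ k) ^ lg (2 ^ k) = 2 ^ (k * k)"
proof -
  have n1: "n \<ge> 1" using n by simp
  have lgn: "lg n \<ge> 8"
  proof (rule ccontr)
    assume "\<not> lg n \<ge> 8"
    then have "Suc (lg n) \<le> 8" by simp
    then have "(2::nat) ^ Suc (lg n) \<le> 2 ^ 8" by (rule power_increasing) simp
    then show False using lg_bounds[OF n1] n by simp
  qed
  then have k2: "k \<ge> 2" unfolding k_def by simp
  have "(2::nat) ^ 2 \<le> 2 ^ k" using k2 by (rule power_increasing) simp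
  then show "2 ^ k \<ge> (4::nat)" by simp
  show "even ((2::nat) ^ k)" using k2 by simp
  have "(2::nat) ^ k * 2 ^ k * (2 ^ k * 2 ^ k) = 2 ^ (4 * k)" by (simp add: power_add[symmetric] mult_2)
  also have "\<dots> \<le> 2 ^ lg n" unfolding k_def by (rule power_increasing) simp_all
  also have "\<dots> \<le> n" using lg_bounds[OF n1] by simp
  finally show A: "(2::nat) ^ k * 2 ^ k * (2 ^ k * 2 ^ k) \<le> n" .
  have "(2::nat) ^ k * 2 ^ k \<le> 2 ^ k * 2 ^ k * (2 ^ k * 2 ^ k)" by simp
  then show "(2::nat) ^ k * 2 ^ k \<le> n" using A by linarith
  show "((2::nat) ^ k) ^ lg (2 ^ k) = 2 ^ (k * k)" by (simp add: power_mult)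
qed

theorem theorem5p5:
  shows "(\<exists>(L1 :: nat \<Rightarrow> nat list set) (L2 :: nat \<Rightarrow> nat list set) C c.
            c > 0 \<and>
            (\<forall>\<^sub>F n in sequentially.
               finite (L1 n) \<and> finite (L2 n) \<and>
               (\<exists>r1 r2. lang r1 = L1 n \<and> lang r2 = L2 n \<and>
                   real (rpn_len r1) \<le> C * real n \<and> real (rpn_len r2) \<le> C * real n) \<and>
               real (rpn (L1 n \<inter> L2 n)) \<ge> real n powr (c * ln (real n)) \<and>
               real (rpn (shuffle_lang (L1 n) (L2 n))) \<ge> real n powr (c * ln (real n))))
       \<and>
         (\<exists>(L :: nat \<Rightarrow> nat list set) C c.
            c > 0 \<and>
            (\<forall>\<^sub>F n in sequentially.
               (\<exists>r. lang r = L n \<and> real (rpn_len r) \<le> C * real n) \<and>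
               real (rpn {w \<in> L n. length w = n}) \<ge> real n powr (c * ln (real n))))"
proof
  define Wf :: "nat \<Rightarrow> nat" where "Wf n = 2 ^ (lg n div 4)" for n
  define RA where "RA n = Plus (LA (Wf n) (Wf n) (Wf n * Wf n)) (Xre (Wf n) (Wf n div 2))" for n
  define RB where "RB n = Plus (LB2 (Wf n) (Wf n * Wf n)) (Yre (Wf n) (Wf n div 2))" for n
  show "\<exists>(L1 :: nat \<Rightarrow> nat list set) (L2 :: nat \<Rightarrow> nat list set) C c.
            c > 0 \<and>
            (\<forall>\<^sub>F n in sequentially.
               finite (L1 n) \<and> finite (L2 n) \<and>
               (\<exists>r1 r2. lang r1 = L1 n \<and> lang r2 = L2 n \<and>
                   real (rpn_len r1) \<le> C * real n \<and> real (rpn_len r2) \<le> C * real n) \<and>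
               real (rpn (L1 n \<inter> L2 n)) \<ge> real n powr (c * ln (real n)) \<and>
               real (rpn (shuffle_lang (L1 n) (L2 n))) \<ge> real n powr (c * ln (real n)))"
  proof (intro exI conjI)
    show "(0::real) < 1 / 64" by simp
    show "\<forall>\<^sub>F n in sequentially.
               finite (lang (RA n)) \<and> finite (lang (RB n)) \<and>
               (\<exists>r1 r2. lang r1 = lang (RA n) \<and> lang r2 = lang (RB n) \<and>
                   real (rpn_len r1) \<le> 40 * real n \<and> real (rpn_len r2) \<le> 40 * real n) \<and>
               real (rpn (lang (RA n) \<inter> lang (RB n))) \<ge> real n powr (1 / 64 * ln (real n)) \<and>
               real (rpn (shuffle_lang (lang (RA n)) (lang (RB n)))) \<ge> real n powr (1 / 64 * ln (real n))"
    proof (rule eventually_sequentiallyI[of 256])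
      fix n :: nat assume n: "n \<ge> 256"
      define W where "W = Wf n"
      have P: "W \<ge> 4" "even W" "W * W * (W * W) \<le> n" "W * W \<le> n" "W ^ lg W = 2 ^ (lg n div 4 * (lg n div 4))"
        using params[OF n] by (simp_all add: W_def Wf_def)
      have W1: "W \<ge> 1" using P by simp
      have W4: "W ^ 4 \<le> n" using P(3) by (simp add: power4_eq_xxxx mult.assoc)
      have fA: "finite (lang (RA n))" unfolding RA_def
        by (intro finite_starfree) (simp add: starfree_LA starfree_Xre)
      have fB: "finite (lang (RB n))" unfolding RB_def
        by (intro finite_starfree) (simp add: starfree_LB2 starfree_Yre)
      have sA: "rpn_len (RA n) \<le> 40 * n"
      proof -
        have "rpn_len (RA n) = rpn_len (LA W W (W * W)) + rpn_len (Xre W (W div 2)) + 1" by (simp add: RA_def W_def)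
        also have "\<dots> \<le> 15 * W ^ 4 + 17 * W ^ 4 + 1" using LA_le[OF W1] Xre_le[OF W1, of "W div 2"] by simp
        also have "\<dots> \<le> 40 * n" using W4 n by linarith
        finally show ?thesis .
      qed
      have sB: "rpn_len (RB n) \<le> 40 * n"
      proof -
        have "rpn_len (RB n) = rpn_len (LB2 W (W * W)) + rpn_len (Yre W (W div 2)) + 1" by (simp add: RB_def W_def)
        also have "\<dots> \<le> 7 * W ^ 4 + 11 * W ^ 4 + 1" using LB2_le[OF W1] Yre_le[OF W1, of "W div 2"] by simp
        also have "\<dots> \<le> 40 * n" using W4 n by linarith
        finally show ?thesis .
      qed
      have bound: "real n powr (1 / 64 * ln (real n)) \<le> real (W ^ lg W)" using asym[OF n] P(5) by simp
      have WN: "W * W \<ge> 1" using W1 by simp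
      have inter: "lang (RA n) \<inter> lang (RB n) = Sl W W (W * W)"
        unfolding RA_def RB_def W_def[symmetric] using inter_lang[OF W1 W1 WN] by simp
      have rA: "W ^ lg W \<le> rpn (lang (RA n) \<inter> lang (RB n))"
      proof (rule rpn_ge)
        show "finite (lang (RA n) \<inter> lang (RB n))" using fA by simp
        fix r assume "lang r = lang (RA n) \<inter> lang (RB n)"
        then show "W ^ lg W \<le> rpn_len r" using slice_LB[OF W1 W1 _, of "W * W" r] inter by simp
      qed
      have m1: "W div 2 \<ge> 1" using P by simp
      have m2: "2 * (W div 2) = W" using P(2) by simp
      have rB: "W ^ lg W \<le> rpn (shuffle_lang (lang (RA n)) (lang (RB n)))"
      proof (rule rpn_ge)
        show "finite (shuffle_lang (lang (RA n)) (lang (RB n)))" using fA fB by (simp add: shuffle_lang_def)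
        fix r assume r: "lang r = shuffle_lang (lang (RA n)) (lang (RB n))"
        have "lang r = shuffle_lang (lang (LA W W (W * W)) \<union> lang (Xre W (W div 2))) (lang (LB2 W (W * W)) \<union> lang (Yre W (W div 2)))"
          using r by (simp add: RA_def RB_def W_def)
        from shuffle_LB[OF W1 W1 WN m1 this] show "W ^ lg W \<le> rpn_len r" using m2 by simp
      qed
      show "finite (lang (RA n)) \<and> finite (lang (RB n)) \<and>
               (\<exists>r1 r2. lang r1 = lang (RA n) \<and> lang r2 = lang (RB n) \<and>
                   real (rpn_len r1) \<le> 40 * real n \<and> real (rpn_len r2) \<le> 40 * real n) \<and>
               real (rpn (lang (RA n) \<inter> lang (RB n))) \<ge> real n powr (1 / 64 * ln (real n)) \<and>
               real (rpn (shuffle_lang (lang (RA n)) (lang (RB n)))) \<ge> real n powr (1 / 64 * ln (real n))"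
      proof (intro conjI exI)
        show "finite (lang (RA n))" "finite (lang (RB n))" by (fact fA, fact fB)
        show "lang (RA n) = lang (RA n)" "lang (RB n) = lang (RB n)" by simp_all
        show "real (rpn_len (RA n)) \<le> 40 * real n" using sA by (metis of_nat_le_iff of_nat_mult of_nat_numeral)
        show "real (rpn_len (RB n)) \<le> 40 * real n" using sB by (metis of_nat_le_iff of_nat_mult of_nat_numeral)
        show "real n powr (1 / 64 * ln (real n)) \<le> real (rpn (lang (RA n) \<inter> lang (RB n)))"
          using bound rA by (meson of_nat_le_iff order_trans)
        show "real n powr (1 / 64 * ln (real n)) \<le> real (rpn (shuffle_lang (lang (RA n)) (lang (RB n))))"
          using bound rB by (meson of_nat_le_iff order_trans)
      qed
    qed
  qed
next
  define Wf :: "nat \<Rightarrow> nat" where "Wf n = 2 ^ (lg n div 4)" for n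
  show "\<exists>(L :: nat \<Rightarrow> nat list set) C c.
            c > 0 \<and>
            (\<forall>\<^sub>F n in sequentially.
               (\<exists>r. lang r = L n \<and> real (rpn_len r) \<le> C * real n) \<and>
               real (rpn {w \<in> L n. length w = n}) \<ge> real n powr (c * ln (real n)))"
  proof (intro exI conjI)
    show "(0::real) < 1 / 64" by simp
    show "\<forall>\<^sub>F n in sequentially.
               (\<exists>r. lang r = lang (Lc (Wf n) (Wf n)) \<and> real (rpn_len r) \<le> 40 * real n) \<and>
               real (rpn {w \<in> lang (Lc (Wf n) (Wf n)). length w = n}) \<ge> real n powr (1 / 64 * ln (real n))"
    proof (rule eventually_sequentiallyI[of 256])
      fix n :: nat assume n: "n \<ge> 256"
      define W where "W = Wf n"
      have P: "W \<ge> 4" "even W" "W * W * (W * W) \<le> n" "W * W \<le> n" "W ^ lg W = 2 ^ (lg n div 4 * (lg n div 4))"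
        using params[OF n] by (simp_all add: W_def Wf_def)
      have W1: "W \<ge> 1" using P by simp
      have W4: "W ^ 4 \<le> n" using P(3) by (simp add: power4_eq_xxxx mult.assoc)
      have s: "rpn_len (Lc W W) \<le> 40 * n" using Lc_le[OF W1] W4 n by linarith
      have bound: "real n powr (1 / 64 * ln (real n)) \<le> real (W ^ lg W)" using asym[OF n] P(5) by simp
      have sl: "{w \<in> lang (Lc W W). length w = n} = Sl W W n" by (rule lang_Lc)
      have n1: "n \<ge> 1" using n by simp
      have r: "W ^ lg W \<le> rpn {w \<in> lang (Lc W W). length w = n}"
      proof (rule rpn_ge)
        have "Sl W W n = lang (LA W W n) \<inter> lang (LB2 W n)" using lang_LA_LB2[OF W1] by simp
        moreover have "finite (lang (LA W W n))" by (intro finite_starfree starfree_LA)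
        ultimately show "finite {w \<in> lang (Lc W W). length w = n}" using sl by simp
        fix r assume "lang r = {w \<in> lang (Lc W W). length w = n}"
        then show "W ^ lg W \<le> rpn_len r" using slice_LB[OF W1 W1 P(4)] sl by simp
      qed
      show "(\<exists>r. lang r = lang (Lc (Wf n) (Wf n)) \<and> real (rpn_len r) \<le> 40 * real n) \<and>
               real (rpn {w \<in> lang (Lc (Wf n) (Wf n)). length w = n}) \<ge> real n powr (1 / 64 * ln (real n))"
      proof (intro conjI exI)
        show "lang (Lc (Wf n) (Wf n)) = lang (Lc (Wf n) (Wf n))" by simp
        show "real (rpn_len (Lc (Wf n) (Wf n))) \<le> 40 * real n" using s unfolding W_def
          by (metis of_nat_le_iff of_nat_mult of_nat_numeral)
        show "real n powr (1 / 64 * ln (real n)) \<le> real (rpn {w \<in> lang (Lc (Wf n) (Wf n)). length w = n})"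
          using bound r unfolding W_def by (meson of_nat_le_iff order_trans)
      qed
    qed
  qed
qed

end
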